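(* If $(e_n)_{n\in\mathbb{N}}$ is a seminormalized quasisubsymmetric basic sequence in a Banach space, then either $(e_n)$ is equivalent to the unit vector basis of $\ell_1$, or there exists a subsequence $(e_{k_n})$ of $(e_n)$ such that the sequence $(e_{k_{2n}}-e_{k_{2n-1}})_{n\in\mathbb{N}}$ is an unconditional basic sequence.
   Context: A sequence $(e_n)$ is seminormalized if $0<\inf_n\|e_n\|\le\sup_n\|e_n\|<\infty$. For basic sequences, $(x_n)$ dominates $(y_n)$ if there is $C>0$ with $\|\sum a_ny_n\|\le C\|\sum a_nx_n\|$ for all finitely supported scalar sequences $(a_n)$. A basic sequence $(e_n)$ is quasisubsymmetric if for any two increasing sequences $(k_n),(\ell_n)$ of positive integers with $k_n\le\ell_n$ for all $n$, $(e_{k_n})$ dominates $(e_{\ell_n})$. *)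

theory Defs
  imports "HOL-Analysis.Analysis"
begin

text \<open>Sequences are indexed by nat starting at 0; scalars are real.\<close>

definition seminormalized :: "(nat \<Rightarrow> 'a::real_normed_vector) \<Rightarrow> bool" where
  "seminormalized e \<longleftrightarrow> (\<exists>m M. 0 < m \<and> (\<forall>n. m \<le> norm (e n) \<and> norm (e n) \<le> M))"

definition basic_seq :: "(nat \<Rightarrow> 'a::real_normed_vector) \<Rightarrow> bool" where
  "basic_seq e \<longleftrightarrow>
     (\<forall>x \<in> closure (span (range e)). \<exists>!a::nat \<Rightarrow> real. (\<lambda>N. \<Sum>i<N. a i *\<^sub>R e i) \<longlonglongrightarrow> x)"

definition unconditional_basic_seq :: "(nat \<Rightarrow> 'a::real_normed_vector) \<Rightarrow> bool" where
  "unconditional_basic_seq e \<longleftrightarrow> basic_seq e \<and>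
     (\<forall>x \<in> closure (span (range e)). \<forall>a::nat \<Rightarrow> real.
        (\<lambda>N. \<Sum>i<N. a i *\<^sub>R e i) \<longlonglongrightarrow> x \<longrightarrow>
        (\<forall>\<sigma>::nat \<Rightarrow> nat. bij \<sigma> \<longrightarrow> (\<lambda>N. \<Sum>i<N. a (\<sigma> i) *\<^sub>R e (\<sigma> i)) \<longlonglongrightarrow> x))"

text \<open>(x n) dominates (y n): finitely supported coefficient sequences are exactly
  those supported in some initial segment {..<N}.\<close>
definition dominates :: "(nat \<Rightarrow> 'a::real_normed_vector) \<Rightarrow> (nat \<Rightarrow> 'b::real_normed_vector) \<Rightarrow> bool" where
  "dominates x y \<longleftrightarrow> (\<exists>C>0. \<forall>(a::nat \<Rightarrow> real) N.
      norm (\<Sum>n<N. a n *\<^sub>R y n) \<le> C * norm (\<Sum>n<N. a n *\<^sub>R x n))"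

definition quasisubsymmetric :: "(nat \<Rightarrow> 'a::real_normed_vector) \<Rightarrow> bool" where
  "quasisubsymmetric e \<longleftrightarrow> basic_seq e \<and>
     (\<forall>k l :: nat \<Rightarrow> nat. strict_mono k \<longrightarrow> strict_mono l \<longrightarrow> (\<forall>n. k n \<le> l n) \<longrightarrow>
        dominates (e \<circ> k) (e \<circ> l))"

text \<open>Equivalence to the unit vector basis of l1 (whose norm is the sum of absolute
  values of the coefficients): mutual domination, written out.\<close>
definition equivalent_l1_basis :: "(nat \<Rightarrow> 'a::real_normed_vector) \<Rightarrow> bool" where
  "equivalent_l1_basis e \<longleftrightarrow> (\<exists>c C. 0 < c \<and> 0 < C \<and> (\<forall>(a::nat \<Rightarrow> real) N.
      c * (\<Sum>n<N. \<bar>a n\<bar>) \<le> norm (\<Sum>n<N. a n *\<^sub>R e n) \<and>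
      norm (\<Sum>n<N. a n *\<^sub>R e n) \<le> C * (\<Sum>n<N. \<bar>a n\<bar>)))"

end

theory Submission
  imports Defs
begin

locale suppdata =
  fixes d :: "nat \<Rightarrow> 'a::real_normed_vector" and \<delta> K :: real
  assumes dpos: "\<delta> > 0" and Kpos: "K > 0"
    and dlow: "\<And>j. \<delta> \<le> norm (d j)"
    and supp: "\<And>b N F. F \<subseteq> {..<N} \<Longrightarrow>
        norm (\<Sum>j\<in>F. b j *\<^sub>R d j) \<le> K * norm (\<Sum>j<N. b j *\<^sub>R d j)"
begin

lemma coef_bound:
  assumes "j < N"
  shows "\<bar>b j\<bar> * \<delta> \<le> K * norm (\<Sum>i<N. b i *\<^sub>R d i)"
proof -
  have "\<bar>b j\<bar> * \<delta> \<le> \<bar>b j\<bar> * norm (d j)" using dlow by (simp add: mult_left_mono)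
  also have "\<dots> = norm (\<Sum>i\<in>{j}. b i *\<^sub>R d i)" by simp
  also have "\<dots> \<le> K * norm (\<Sum>i<N. b i *\<^sub>R d i)" using supp[of "{j}" N b] assms by simp
  finally show ?thesis .
qed

lemma proj_bound:
  assumes "m \<le> N"
  shows "norm (\<Sum>i<m. b i *\<^sub>R d i) \<le> K * norm (\<Sum>i<N. b i *\<^sub>R d i)"
  using supp[of "{..<m}" N b] assms by auto

lemma uniq0:
  assumes "(\<lambda>N. \<Sum>i<N. c i *\<^sub>R d i) \<longlonglongrightarrow> 0"
  shows "c = (\<lambda>_. 0)"
proof
  fix j
  have "(\<lambda>N. K * norm (\<Sum>i<N. c i *\<^sub>R d i)) \<longlonglongrightarrow> K * norm (0::'a)"
    by (intro tendsto_intros assms)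
  hence lim: "(\<lambda>N. K * norm (\<Sum>i<N. c i *\<^sub>R d i)) \<longlonglongrightarrow> 0" by simp
  have "\<forall>N\<ge>Suc j. \<bar>c j\<bar> * \<delta> \<le> K * norm (\<Sum>i<N. c i *\<^sub>R d i)"
    using coef_bound by auto
  hence "\<bar>c j\<bar> * \<delta> \<le> 0" using LIMSEQ_le_const[OF lim] by blast
  thus "c j = 0" using dpos by (simp add: mult_le_0_iff)
qed

lemma span_rep:
  assumes "v \<in> span (range d)"
  shows "\<exists>c N. \<forall>M\<ge>N. v = (\<Sum>i<M. c i *\<^sub>R d i)"
proof (rule span_induct_alt[OF assms, where h="\<lambda>v. \<exists>c N. \<forall>M\<ge>N. v = (\<Sum>i<M. c i *\<^sub>R d i)"])
  show "\<exists>c N. \<forall>M\<ge>N. (0::'a) = (\<Sum>i<M. c i *\<^sub>R d i)"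
    by (rule exI[of _ "\<lambda>_. 0"]) simp
next
  fix a x y
  assume "x \<in> range d" and "\<exists>c N. \<forall>M\<ge>N. y = (\<Sum>i<M. c i *\<^sub>R d i)"
  then obtain i c N where xi: "x = d i" and cN: "\<forall>M\<ge>N. y = (\<Sum>i<M. c i *\<^sub>R d i)" by auto
  define c' where "c' = (\<lambda>j. c j + (if j = i then a else 0))"
  have "\<forall>M\<ge>max N (Suc i). a *\<^sub>R x + y = (\<Sum>j<M. c' j *\<^sub>R d j)"
  proof (intro allI impI)
    fix M assume M: "M \<ge> max N (Suc i)"
    have "(\<Sum>j<M. c' j *\<^sub>R d j) = (\<Sum>j<M. c j *\<^sub>R d j) + (\<Sum>j<M. (if j = i then a else 0) *\<^sub>R d j)"
      unfolding c'_def by (simp add: scaleR_add_left sum.distrib)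
    also have "(\<Sum>j<M. (if j = i then a else 0) *\<^sub>R d j) = (\<Sum>j<M. (if j = i then a *\<^sub>R d j else 0))"
      by (intro sum.cong) auto
    also have "\<dots> = a *\<^sub>R d i" using M by (subst sum.delta) auto
    finally show "a *\<^sub>R x + y = (\<Sum>j<M. c' j *\<^sub>R d j)" using cN M xi by auto
  qed
  thus "\<exists>c N. \<forall>M\<ge>N. a *\<^sub>R x + y = (\<Sum>i<M. c i *\<^sub>R d i)" by blast
qed


lemma diff_rep:
  assumes "\<forall>M\<ge>N1. v = (\<Sum>i<M. c i *\<^sub>R d i)" "\<forall>M\<ge>N2. w = (\<Sum>i<M. c' i *\<^sub>R d i)" "M \<ge> N1" "M \<ge> N2"
  shows "v - w = (\<Sum>i<M. (c i - c' i) *\<^sub>R d i)"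
proof -
  have "v = (\<Sum>i<M. c i *\<^sub>R d i)" using assms(1,3) by blast
  moreover have "w = (\<Sum>i<M. c' i *\<^sub>R d i)" using assms(2,4) by blast
  ultimately show ?thesis by (simp add: scaleR_diff_left sum_subtractf)
qed

lemma existence:
  assumes "x \<in> closure (span (range d))"
  shows "\<exists>a. (\<lambda>N. \<Sum>i<N. a i *\<^sub>R d i) \<longlonglongrightarrow> x"
proof -
  obtain v where vS: "\<And>t. v t \<in> span (range d)" and vx: "v \<longlonglongrightarrow> x"
    using assms unfolding closure_sequential by blast
  have ex: "\<forall>t. \<exists>cN. \<forall>M\<ge>snd cN. v t = (\<Sum>i<M. fst cN i *\<^sub>R d i)" using span_rep vS by fastforce
  obtain cN where cN: "\<forall>t. \<forall>M\<ge>snd (cN t). v t = (\<Sum>i<M. fst (cN t) i *\<^sub>R d i)"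
    using choice[OF ex] by blast
  define c where "c t = fst (cN t)" for t
  define N where "N t = snd (cN t)" for t
  have rep: "\<And>t M. M \<ge> N t \<Longrightarrow> v t = (\<Sum>i<M. c t i *\<^sub>R d i)"
    using cN unfolding c_def N_def by blast
  have key: "norm (\<Sum>i<n. (c s i - c t i) *\<^sub>R d i) \<le> K * norm (v s - v t)" for s t n
  proof -
    define M where "M = max n (max (N s) (N t))"
    have "v s - v t = (\<Sum>i<M. (c s i - c t i) *\<^sub>R d i)"
      by (rule diff_rep) (use rep M_def in auto)
    thus ?thesis using proj_bound[of n M "\<lambda>i. c s i - c t i"] M_def by simp
  qed
  have keyc: "\<bar>c s j - c t j\<bar> * \<delta> \<le> K * norm (v s - v t)" for s t j
  proof -
    define M where "M = max (Suc j) (max (N s) (N t))"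
    have "v s - v t = (\<Sum>i<M. (c s i - c t i) *\<^sub>R d i)"
      by (rule diff_rep) (use rep M_def in auto)
    thus ?thesis using coef_bound[of j M "\<lambda>i. c s i - c t i"] M_def by simp
  qed
  have vC: "Cauchy v" using vx by (rule LIMSEQ_imp_Cauchy)
  have "convergent (\<lambda>t. c t j)" for j
  proof (rule real_Cauchy_convergent, rule metric_CauchyI)
    fix e :: real assume e: "e > 0"
    obtain T where T: "\<forall>s\<ge>T. \<forall>t\<ge>T. dist (v s) (v t) < e * \<delta> / K"
      using metric_CauchyD[OF vC, of "e * \<delta> / K"] e dpos Kpos by auto
    show "\<exists>T. \<forall>s\<ge>T. \<forall>t\<ge>T. dist (c s j) (c t j) < e"
    proof (intro exI allI impI)
      fix s t assume "s \<ge> T" "t \<ge> T"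
      hence "norm (v s - v t) < e * \<delta> / K" using T by (simp add: dist_norm)
      moreover have "\<bar>c s j - c t j\<bar> * \<delta> \<le> K * norm (v s - v t)" by (rule keyc)
      moreover have "K * norm (v s - v t) < e * \<delta>"
        using \<open>norm (v s - v t) < e * \<delta> / K\<close> Kpos by (simp add: pos_less_divide_eq mult.commute)
      ultimately have "\<bar>c s j - c t j\<bar> * \<delta> < e * \<delta>" by linarith
      thus "dist (c s j) (c t j) < e" using dpos by (simp add: dist_real_def)
    qed
  qed
  hence exl: "\<forall>j. \<exists>l. (\<lambda>t. c t j) \<longlonglongrightarrow> l" unfolding convergent_def by blast
  obtain \<alpha> where \<alpha>: "\<And>j. (\<lambda>t. c t j) \<longlonglongrightarrow> \<alpha> j"
    using choice[OF exl] by blast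
  have limn: "(\<lambda>t. \<Sum>i<n. c t i *\<^sub>R d i) \<longlonglongrightarrow> (\<Sum>i<n. \<alpha> i *\<^sub>R d i)" for n
    by (intro tendsto_intros \<alpha>)
  show ?thesis
  proof (rule exI, rule LIMSEQ_I)
    fix r :: real assume r: "r > 0"
    define \<eta> where "\<eta> = r / (K + 2)"
    have \<eta>: "\<eta> > 0" using r Kpos by (simp add: \<eta>_def)
    obtain T1 where T1: "\<forall>s\<ge>T1. \<forall>t\<ge>T1. dist (v s) (v t) < \<eta>"
      using metric_CauchyD[OF vC \<eta>] by auto
    obtain T2 where T2: "\<forall>t\<ge>T2. norm (v t - x) < \<eta>"
      using LIMSEQ_D[OF vx \<eta>] by auto
    define T where "T = max T1 T2"
    show "\<exists>n0. \<forall>n\<ge>n0. norm ((\<Sum>i<n. \<alpha> i *\<^sub>R d i) - x) < r"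
    proof (intro exI allI impI)
      fix n assume n: "n \<ge> N T"
      have b1: "norm ((\<Sum>i<n. \<alpha> i *\<^sub>R d i) - (\<Sum>i<n. c T i *\<^sub>R d i)) \<le> K * \<eta>"
      proof (rule LIMSEQ_le_const2)
        show "(\<lambda>s. norm ((\<Sum>i<n. c s i *\<^sub>R d i) - (\<Sum>i<n. c T i *\<^sub>R d i))) \<longlonglongrightarrow>
              norm ((\<Sum>i<n. \<alpha> i *\<^sub>R d i) - (\<Sum>i<n. c T i *\<^sub>R d i))"
          by (intro tendsto_intros limn)
        show "\<exists>N0. \<forall>s\<ge>N0. norm ((\<Sum>i<n. c s i *\<^sub>R d i) - (\<Sum>i<n. c T i *\<^sub>R d i)) \<le> K * \<eta>"
        proof (intro exI allI impI)
          fix s assume "s \<ge> T"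
          hence "norm (v s - v T) < \<eta>" using T1 T_def by (simp add: dist_norm)
          moreover have eqd: "(\<Sum>i<n. c s i *\<^sub>R d i) - (\<Sum>i<n. c T i *\<^sub>R d i) = (\<Sum>i<n. (c s i - c T i) *\<^sub>R d i)"
            by (simp add: scaleR_diff_left sum_subtractf)
          ultimately show "norm ((\<Sum>i<n. c s i *\<^sub>R d i) - (\<Sum>i<n. c T i *\<^sub>R d i)) \<le> K * \<eta>"
          proof -
            have "K * norm (v s - v T) \<le> K * \<eta>"
              using \<open>norm (v s - v T) < \<eta>\<close> Kpos by (intro mult_left_mono) auto
            thus ?thesis using key[where n=n and s=s and t=T] eqd by simp
          qed
        qed
      qed
      have "(\<Sum>i<n. c T i *\<^sub>R d i) = v T" using rep n by simp
      moreover have "norm (v T - x) < \<eta>" using T2 T_def by simp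
      ultimately have "norm ((\<Sum>i<n. \<alpha> i *\<^sub>R d i) - x) \<le> K * \<eta> + \<eta>"
        using b1 norm_triangle_ineq[of "(\<Sum>i<n. \<alpha> i *\<^sub>R d i) - v T" "v T - x"]
        by simp
      also have "\<dots> < r"
      proof -
        have "K + 2 \<noteq> 0" using Kpos by simp
        hence "(K + 2) * \<eta> = r" unfolding \<eta>_def by simp
        hence "K * \<eta> + 2 * \<eta> = r" by (simp add: algebra_simps)
        thus ?thesis using \<eta> by linarith
      qed
      finally show "norm ((\<Sum>i<n. \<alpha> i *\<^sub>R d i) - x) < r" .
    qed
  qed
qed

end

context suppdata begin
lemma tail_bound:
  assumes "M \<le> Q" "{..<M} \<subseteq> F" "F \<subseteq> {..<Q}"
  shows "norm ((\<Sum>i\<in>F. a i *\<^sub>R d i) - (\<Sum>i<M. a i *\<^sub>R d i))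
         \<le> K * norm ((\<Sum>i<Q. a i *\<^sub>R d i) - (\<Sum>i<M. a i *\<^sub>R d i))"
proof -
  define c where "c i = (if M \<le> i then a i else 0)" for i
  have fin: "finite F" using assms(3) finite_subset by blast
  have "(\<Sum>i\<in>F. a i *\<^sub>R d i) = (\<Sum>i<M. a i *\<^sub>R d i) + (\<Sum>i\<in>F - {..<M}. a i *\<^sub>R d i)"
    using sum.subset_diff[OF assms(2) fin] by (simp add: add.commute)
  moreover have "(\<Sum>i\<in>F - {..<M}. a i *\<^sub>R d i) = (\<Sum>i\<in>F - {..<M}. c i *\<^sub>R d i)"
    by (intro sum.cong) (auto simp: c_def)
  moreover have "(\<Sum>i<Q. c i *\<^sub>R d i) = (\<Sum>i<Q. a i *\<^sub>R d i) - (\<Sum>i<M. a i *\<^sub>R d i)"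
  proof -
    have "(\<Sum>i<Q. a i *\<^sub>R d i) = (\<Sum>i<M. a i *\<^sub>R d i) + (\<Sum>i\<in>{..<Q} - {..<M}. a i *\<^sub>R d i)"
      using sum.subset_diff[of "{..<M}" "{..<Q}"] assms(1) by (simp add: add.commute)
    moreover have "(\<Sum>i\<in>{..<Q} - {..<M}. a i *\<^sub>R d i) = (\<Sum>i\<in>{..<Q} - {..<M}. c i *\<^sub>R d i)"
      by (intro sum.cong) (auto simp: c_def)
    moreover have "(\<Sum>i<Q. c i *\<^sub>R d i) = (\<Sum>i\<in>{..<Q} - {..<M}. c i *\<^sub>R d i)"
      by (intro sum.mono_neutral_right) (auto simp: c_def)
    ultimately show ?thesis by simp
  qed
  moreover have "norm (\<Sum>i\<in>F - {..<M}. c i *\<^sub>R d i) \<le> K * norm (\<Sum>i<Q. c i *\<^sub>R d i)"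
    using supp[of "F - {..<M}" Q c] assms(3) by blast
  ultimately show ?thesis by simp
qed

lemma rearr:
  assumes S: "(\<lambda>N. \<Sum>i<N. a i *\<^sub>R d i) \<longlonglongrightarrow> x" and \<sigma>: "bij \<sigma>"
  shows "(\<lambda>N. \<Sum>i<N. a (\<sigma> i) *\<^sub>R d (\<sigma> i)) \<longlonglongrightarrow> x"
proof (rule LIMSEQ_I)
  fix r :: real assume r: "r > 0"
  define S where "S N = (\<Sum>i<N. a i *\<^sub>R d i)" for N
  have reidx: "(\<Sum>i<N. a (\<sigma> i) *\<^sub>R d (\<sigma> i)) = (\<Sum>i\<in>\<sigma> ` {..<N}. a i *\<^sub>R d i)" for N
  proof -
    have "inj_on \<sigma> {..<N}" using \<sigma> bij_is_inj inj_on_subset by blast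
    thus ?thesis by (simp add: sum.reindex)
  qed
  define \<eta> where "\<eta> = r / (K + 2)"
  have \<eta>: "\<eta> > 0" using r Kpos by (simp add: \<eta>_def)
  have SC: "Cauchy S" using S LIMSEQ_imp_Cauchy unfolding S_def by blast
  obtain M1 where M1: "\<forall>p\<ge>M1. \<forall>q\<ge>M1. dist (S p) (S q) < \<eta>"
    using metric_CauchyD[OF SC \<eta>] by auto
  obtain M2 where M2: "\<forall>n\<ge>M2. norm (S n - x) < \<eta>"
    using LIMSEQ_D[OF S \<eta>] unfolding S_def by auto
  define M where "M = max M1 M2"
  define N0 where "N0 = Suc (Max (insert 0 (inv \<sigma> ` {..<M})))"
  show "\<exists>n0. \<forall>N\<ge>n0. norm ((\<Sum>i<N. a (\<sigma> i) *\<^sub>R d (\<sigma> i)) - x) < r"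
  proof (intro exI allI impI)
    fix N assume N: "N \<ge> N0"
    define F where "F = \<sigma> ` {..<N}"
    have finF: "finite F" unfolding F_def by simp
    have sub1: "{..<M} \<subseteq> F"
    proof
      fix i assume i: "i \<in> {..<M}"
      have "inv \<sigma> i \<le> Max (insert 0 (inv \<sigma> ` {..<M}))" using i by (intro Max_ge) auto
      hence "inv \<sigma> i < N" using N N0_def by simp
      moreover have "\<sigma> (inv \<sigma> i) = i" using \<sigma> by (meson bij_is_surj surj_f_inv_f)
      ultimately show "i \<in> F" unfolding F_def by (metis imageI lessThan_iff)
    qed
    define Q where "Q = Suc (Max (insert M F))"
    have MQ: "M \<le> Q" using finF unfolding Q_def by (simp add: le_SucI)
    have sub2: "F \<subseteq> {..<Q}"
    proof
      fix i assume "i \<in> F"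
      hence "i \<le> Max (insert M F)" using finF by (intro Max_ge) auto
      thus "i \<in> {..<Q}" unfolding Q_def by simp
    qed
    have "norm ((\<Sum>i\<in>F. a i *\<^sub>R d i) - S M) \<le> K * norm (S Q - S M)"
      using tail_bound[OF MQ sub1 sub2] unfolding S_def by simp
    also have "\<dots> \<le> K * \<eta>"
    proof -
      have "norm (S Q - S M) < \<eta>" using M1 MQ M_def by (simp add: dist_norm)
      thus ?thesis using Kpos by (intro mult_left_mono) auto
    qed
    finally have b1: "norm ((\<Sum>i\<in>F. a i *\<^sub>R d i) - S M) \<le> K * \<eta>" .
    have b2: "norm (S M - x) < \<eta>" using M2 M_def by simp
    have "norm ((\<Sum>i\<in>F. a i *\<^sub>R d i) - x) < K * \<eta> + \<eta>"
      using b1 b2 norm_triangle_ineq[of "(\<Sum>i\<in>F. a i *\<^sub>R d i) - S M" "S M - x"] by simp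
    also have "\<dots> < r"
    proof -
      have "K + 2 \<noteq> 0" using Kpos by simp
      hence "(K + 2) * \<eta> = r" unfolding \<eta>_def by simp
      hence "K * \<eta> + 2 * \<eta> = r" by (simp add: algebra_simps)
      thus ?thesis using \<eta> by linarith
    qed
    finally show "norm ((\<Sum>i<N. a (\<sigma> i) *\<^sub>R d (\<sigma> i)) - x) < r" using reidx F_def by simp
  qed
qed

theorem unconditional:
  "unconditional_basic_seq d"
proof -
  have basic: "basic_seq d"
    unfolding basic_seq_def
  proof
    fix x assume x: "x \<in> closure (span (range d))"
    obtain a where a: "(\<lambda>N. \<Sum>i<N. a i *\<^sub>R d i) \<longlonglongrightarrow> x" using existence[OF x] by blast
    show "\<exists>!a. (\<lambda>N. \<Sum>i<N. a i *\<^sub>R d i) \<longlonglongrightarrow> x"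
    proof (rule ex1I[of _ a])
      show "(\<lambda>N. \<Sum>i<N. a i *\<^sub>R d i) \<longlonglongrightarrow> x" by (rule a)
    next
      fix b assume b: "(\<lambda>N. \<Sum>i<N. b i *\<^sub>R d i) \<longlonglongrightarrow> x"
      have "(\<lambda>N. (\<Sum>i<N. b i *\<^sub>R d i) - (\<Sum>i<N. a i *\<^sub>R d i)) \<longlonglongrightarrow> x - x"
        by (intro tendsto_intros a b)
      hence "(\<lambda>N. \<Sum>i<N. (b i - a i) *\<^sub>R d i) \<longlonglongrightarrow> 0"
        by (simp add: scaleR_diff_left sum_subtractf)
      hence z: "(\<lambda>i. b i - a i) = (\<lambda>_. 0)" by (rule uniq0)
      show "b = a"
      proof
        fix i show "b i = a i" using fun_cong[OF z, of i] by simp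
      qed
    qed
  qed
  show ?thesis unfolding unconditional_basic_seq_def using basic rearr by blast
qed

end

lemma avg_norm:
  fixes f :: "nat \<Rightarrow> 'a::real_normed_vector"
  assumes "m > 0" "\<And>i. i < m \<Longrightarrow> norm (f i) \<le> R"
  shows "norm ((1 / real m) *\<^sub>R (\<Sum>i<m. f i)) \<le> R"
proof -
  have "norm (\<Sum>i<m. f i) \<le> (\<Sum>i<m. R)"
    using assms(2) by (intro order.trans[OF norm_sum] sum_mono) auto
  hence "norm (\<Sum>i<m. f i) \<le> real m * R" by simp
  thus ?thesis using assms(1) by (simp add: field_simps)
qed

lemma avg_alg:
  fixes u :: "nat \<Rightarrow> 'a::real_normed_vector"
  assumes "m > 0"
  shows "(1 / real m) *\<^sub>R (\<Sum>i<m. y + c *\<^sub>R u i) = y + c *\<^sub>R ((1 / real m) *\<^sub>R (\<Sum>i<m. u i))"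
proof -
  have "(\<Sum>i<m. y + c *\<^sub>R u i) = real m *\<^sub>R y + c *\<^sub>R (\<Sum>i<m. u i)"
    by (simp add: sum.distrib scaleR_sum_right sum_constant_scaleR)
  thus ?thesis using assms by (simp add: scaleR_add_right)
qed

lemma avg_lemma:
  fixes u :: "nat \<Rightarrow> nat \<Rightarrow> 'a::real_normed_vector"
  assumes "finite G" "\<forall>j\<in>G. m j > 0"
    and "\<forall>\<sigma>. (\<forall>j\<in>G. \<sigma> j < m j) \<longrightarrow> norm (x + (\<Sum>j\<in>G. b j *\<^sub>R u j (\<sigma> j))) \<le> R"
  shows "norm (x + (\<Sum>j\<in>G. b j *\<^sub>R ((1 / real (m j)) *\<^sub>R (\<Sum>i<m j. u j i)))) \<le> R"
  using assms
proof (induction G arbitrary: x rule: finite_induct)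
  case empty
  then show ?case by auto
next
  case (insert j G)
  define avg where "avg j' = (1 / real (m j')) *\<^sub>R (\<Sum>i<m j'. u j' i)" for j'
  define rest where "rest = (\<Sum>j'\<in>G. b j' *\<^sub>R avg j')"
  have mj: "m j > 0" using insert.prems by simp
  have each: "norm (x + b j *\<^sub>R u j i + rest) \<le> R" if i: "i < m j" for i
  proof -
    have "norm ((x + b j *\<^sub>R u j i) + (\<Sum>j'\<in>G. b j' *\<^sub>R avg j')) \<le> R"
      unfolding avg_def
    proof (rule insert.IH)
      show "\<forall>j\<in>G. 0 < m j" using insert.prems by simp
      show "\<forall>\<sigma>. (\<forall>j\<in>G. \<sigma> j < m j) \<longrightarrow> norm (x + b j *\<^sub>R u j i + (\<Sum>j\<in>G. b j *\<^sub>R u j (\<sigma> j))) \<le> R"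
      proof (intro allI impI)
        fix \<sigma> assume \<sigma>: "\<forall>j\<in>G. \<sigma> j < m j"
        define \<tau> where "\<tau> = \<sigma>(j := i)"
        have "\<forall>j'\<in>insert j G. \<tau> j' < m j'" using \<sigma> i unfolding \<tau>_def by auto
        hence "norm (x + (\<Sum>j'\<in>insert j G. b j' *\<^sub>R u j' (\<tau> j'))) \<le> R" using insert.prems by blast
        moreover have "(\<Sum>j'\<in>insert j G. b j' *\<^sub>R u j' (\<tau> j')) = b j *\<^sub>R u j i + (\<Sum>j'\<in>G. b j' *\<^sub>R u j' (\<sigma> j'))"
        proof -
          have "(\<Sum>j'\<in>insert j G. b j' *\<^sub>R u j' (\<tau> j')) = b j *\<^sub>R u j (\<tau> j) + (\<Sum>j'\<in>G. b j' *\<^sub>R u j' (\<tau> j'))"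
            using insert.hyps by simp
          moreover have "(\<Sum>j'\<in>G. b j' *\<^sub>R u j' (\<tau> j')) = (\<Sum>j'\<in>G. b j' *\<^sub>R u j' (\<sigma> j'))"
            using insert.hyps unfolding \<tau>_def by (intro sum.cong) auto
          ultimately show ?thesis unfolding \<tau>_def by simp
        qed
        ultimately show "norm (x + b j *\<^sub>R u j i + (\<Sum>j\<in>G. b j *\<^sub>R u j (\<sigma> j))) \<le> R"
          by (simp add: add.assoc)
      qed
    qed
    thus ?thesis unfolding rest_def .
  qed
  have "norm ((1 / real (m j)) *\<^sub>R (\<Sum>i<m j. (x + rest) + b j *\<^sub>R u j i)) \<le> R"
    using each mj by (intro avg_norm) (auto simp: algebra_simps)
  hence "norm ((x + rest) + b j *\<^sub>R avg j) \<le> R"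
    using avg_alg[OF mj, of "x + rest" "b j" "u j"] unfolding avg_def by simp
  moreover have "(\<Sum>j'\<in>insert j G. b j' *\<^sub>R avg j') = b j *\<^sub>R avg j + rest"
    using insert.hyps unfolding rest_def by simp
  ultimately show ?case unfolding avg_def[symmetric] by (simp add: algebra_simps)
qed


definition valid :: "(nat \<Rightarrow> nat) \<Rightarrow> (nat \<Rightarrow> nat) \<Rightarrow> bool" where
  "valid k l \<longleftrightarrow> strict_mono k \<and> strict_mono l \<and> (\<forall>n. k n \<le> l n)"

definition wit :: "(nat \<Rightarrow> 'a::real_normed_vector) \<Rightarrow> real \<Rightarrow> nat \<Rightarrow> (nat \<Rightarrow> nat) \<Rightarrow> (nat \<Rightarrow> nat) \<Rightarrow> bool" where
  "wit e C q k l \<longleftrightarrow> (\<exists>a N. N \<le> q \<and>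
      norm (\<Sum>n<N. a n *\<^sub>R e (l n)) > C * norm (\<Sum>n<N. a n *\<^sub>R e (k n)))"

definition agree :: "nat \<Rightarrow> (nat \<Rightarrow> nat) \<Rightarrow> (nat \<Rightarrow> nat) \<Rightarrow> bool" where
  "agree p k k0 \<longleftrightarrow> (\<forall>n<p. k n = k0 n)"

definition nxt :: "(nat \<Rightarrow> 'a::real_normed_vector) \<Rightarrow> nat \<Rightarrow> (nat \<Rightarrow> nat) \<times> (nat \<Rightarrow> nat) \<times> nat
    \<Rightarrow> (nat \<Rightarrow> nat) \<times> (nat \<Rightarrow> nat) \<times> nat" where
  "nxt e j s = (SOME t. valid (fst t) (fst (snd t)) \<and> agree (snd (snd s)) (fst t) (fst s)
      \<and> agree (snd (snd s)) (fst (snd t)) (fst (snd s)) \<and> snd (snd t) > snd (snd s)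
      \<and> wit e (real (Suc j)) (snd (snd t)) (fst t) (fst (snd t)))"

primrec st :: "(nat \<Rightarrow> 'a::real_normed_vector) \<Rightarrow> nat \<Rightarrow> (nat \<Rightarrow> nat) \<times> (nat \<Rightarrow> nat) \<times> nat" where
  "st e 0 = (id, id, 0)"
| "st e (Suc j) = nxt e j (st e j)"

lemma agree_sum:
  assumes "agree q k k'" "N \<le> q"
  shows "(\<Sum>n<N. a n *\<^sub>R e (k n)) = (\<Sum>n<N. a n *\<^sub>R e (k' n))"
  using assms unfolding agree_def by (intro sum.cong) auto

lemma wit_agree:
  assumes "wit e C q k l" "agree q k' k" "agree q l' l"
  shows "wit e C q k' l'"
proof -
  obtain a N where "N \<le> q" "norm (\<Sum>n<N. a n *\<^sub>R e (l n)) > C * norm (\<Sum>n<N. a n *\<^sub>R e (k n))"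
    using assms(1) unfolding wit_def by auto
  moreover have "(\<Sum>n<N. a n *\<^sub>R e (k' n)) = (\<Sum>n<N. a n *\<^sub>R e (k n))"
    using agree_sum[OF assms(2)] \<open>N \<le> q\<close> by blast
  moreover have "(\<Sum>n<N. a n *\<^sub>R e (l' n)) = (\<Sum>n<N. a n *\<^sub>R e (l n))"
    using agree_sum[OF assms(3)] \<open>N \<le> q\<close> by blast
  ultimately have "N \<le> q \<and> norm (\<Sum>n<N. a n *\<^sub>R e (l' n)) > C * norm (\<Sum>n<N. a n *\<^sub>R e (k' n))"
    by simp
  thus ?thesis unfolding wit_def by blast
qed

lemma step1:
  fixes e :: "nat \<Rightarrow> 'a::real_normed_vector"
  assumes qs: "\<And>k l. valid k l \<Longrightarrow> dominates (e \<circ> k) (e \<circ> l)"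
  shows "\<exists>C>0. \<exists>p k0 l0. valid k0 l0 \<and> (\<forall>k l. valid k l \<and> agree p k k0 \<and> agree p l l0 \<longrightarrow>
           (\<forall>a N. norm (\<Sum>n<N. a n *\<^sub>R e (l n)) \<le> C * norm (\<Sum>n<N. a n *\<^sub>R e (k n))))"
proof (rule ccontr)
  assume "\<not> ?thesis"
  hence H: "\<And>C p k0 l0. C > 0 \<Longrightarrow> valid k0 l0 \<Longrightarrow> \<exists>k l a N. valid k l \<and> agree p k k0 \<and> agree p l l0 \<and>
              norm (\<Sum>n<N. a n *\<^sub>R e (l n)) > C * norm (\<Sum>n<N. a n *\<^sub>R e (k n))"
    by (meson not_le)
  define K where "K j = fst (st e j)" for j
  define L where "L j = fst (snd (st e j))" for j
  define P where "P j = snd (snd (st e j))" for j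
  have nxtok: "valid (K (Suc j)) (L (Suc j)) \<and> agree (P j) (K (Suc j)) (K j) \<and> agree (P j) (L (Suc j)) (L j)
      \<and> P (Suc j) > P j \<and> wit e (real (Suc j)) (P (Suc j)) (K (Suc j)) (L (Suc j))"
    if v: "valid (K j) (L j)" for j
  proof -
    obtain k l a N where kl: "valid k l" "agree (P j) k (K j)" "agree (P j) l (L j)"
      "norm (\<Sum>n<N. a n *\<^sub>R e (l n)) > real (Suc j) * norm (\<Sum>n<N. a n *\<^sub>R e (k n))"
      using H[of "real (Suc j)" "K j" "L j" "P j"] v by auto
    define q where "q = max N (Suc (P j))"
    have "wit e (real (Suc j)) q k l" unfolding wit_def q_def using kl(4) by (intro exI[of _ a] exI[of _ N]) auto
    hence ex: "\<exists>t. valid (fst t) (fst (snd t)) \<and> agree (P j) (fst t) (K j)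
      \<and> agree (P j) (fst (snd t)) (L j) \<and> snd (snd t) > P j
      \<and> wit e (real (Suc j)) (snd (snd t)) (fst t) (fst (snd t))"
      using kl q_def by (intro exI[of _ "(k, l, q)"]) auto
    show ?thesis
      using someI_ex[OF ex] unfolding K_def L_def P_def st.simps nxt_def
      by (simp add: K_def[symmetric] L_def[symmetric] P_def[symmetric])
  qed
  have v0: "valid (K 0) (L 0)" unfolding K_def L_def valid_def by (simp add: strict_mono_def)
  have vall: "valid (K j) (L j)" for j
    by (induction j) (use v0 nxtok in auto)
  have Pinc: "P j < P (Suc j)" for j using nxtok vall by blast
  have Pmono: "i \<le> j \<Longrightarrow> P i \<le> P j" for i j
    by (induction j) (use Pinc le_Suc_eq less_imp_le order_trans in fastforce)+
  have Pge: "j \<le> P j" for j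
  proof (induction j)
    case (Suc j) thus ?case using Pinc[of j] by simp
  qed simp
  have agK: "i \<le> j \<Longrightarrow> n < P i \<Longrightarrow> K j n = K i n" for i j n
  proof (induction j)
    case 0 thus ?case by simp
  next
    case (Suc j)
    show ?case
    proof (cases "i = Suc j")
      case False
      hence "i \<le> j" using Suc.prems by simp
      hence "K j n = K i n" using Suc by blast
      moreover have "n < P j" using Pmono[OF \<open>i \<le> j\<close>] Suc.prems by simp
      ultimately show ?thesis using nxtok[OF vall[of j]] unfolding agree_def by simp
    qed simp
  qed
  have agL: "i \<le> j \<Longrightarrow> n < P i \<Longrightarrow> L j n = L i n" for i j n
  proof (induction j)
    case 0 thus ?case by simp
  next
    case (Suc j)
    show ?case
    proof (cases "i = Suc j")
      case False
      hence "i \<le> j" using Suc.prems by simp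
      hence "L j n = L i n" using Suc by blast
      moreover have "n < P j" using Pmono[OF \<open>i \<le> j\<close>] Suc.prems by simp
      ultimately show ?thesis using nxtok[OF vall[of j]] unfolding agree_def by simp
    qed simp
  qed
  define ks where "ks n = K (Suc n) n" for n
  define ls where "ls n = L (Suc n) n" for n
  have ksK: "n < P j \<Longrightarrow> ks n = K j n" for n j
  proof (cases "Suc n \<le> j")
    case True
    have "n < P (Suc n)" using Pge[of "Suc n"] by simp
    thus "ks n = K j n" using agK[OF True] unfolding ks_def by simp
  next
    case False
    assume "n < P j"
    thus "ks n = K j n" using agK[of j "Suc n" n] False unfolding ks_def by simp
  qed
  have lsL: "n < P j \<Longrightarrow> ls n = L j n" for n j
  proof (cases "Suc n \<le> j")
    case True
    have "n < P (Suc n)" using Pge[of "Suc n"] by simp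
    thus "ls n = L j n" using agL[OF True] unfolding ls_def by simp
  next
    case False
    assume "n < P j"
    thus "ls n = L j n" using agL[of j "Suc n" n] False unfolding ls_def by simp
  qed
  have vs: "valid ks ls"
    unfolding valid_def
  proof (intro conjI allI)
    show "strict_mono ks"
    proof (rule strict_mono_Suc_iff[THEN iffD2], intro allI)
      fix n
      have "n < P (Suc (Suc n))" "Suc n < P (Suc (Suc n))" using Pge[of "Suc (Suc n)"] by auto
      hence "ks n = K (Suc (Suc n)) n" "ks (Suc n) = K (Suc (Suc n)) (Suc n)" using ksK by auto
      thus "ks n < ks (Suc n)" using vall[of "Suc (Suc n)"] unfolding valid_def strict_mono_def by simp
    qed
    show "strict_mono ls"
    proof (rule strict_mono_Suc_iff[THEN iffD2], intro allI)
      fix n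
      have "n < P (Suc (Suc n))" "Suc n < P (Suc (Suc n))" using Pge[of "Suc (Suc n)"] by auto
      hence "ls n = L (Suc (Suc n)) n" "ls (Suc n) = L (Suc (Suc n)) (Suc n)" using lsL by auto
      thus "ls n < ls (Suc n)" using vall[of "Suc (Suc n)"] unfolding valid_def strict_mono_def by simp
    qed
    fix n show "ks n \<le> ls n" using vall[of "Suc n"] unfolding ks_def ls_def valid_def by simp
  qed
  obtain C where C: "C > 0" "\<And>a N. norm (\<Sum>n<N. a n *\<^sub>R e (ls n)) \<le> C * norm (\<Sum>n<N. a n *\<^sub>R e (ks n))"
    using qs[OF vs] unfolding dominates_def by auto
  obtain j where j: "C \<le> real (Suc j)"
    by (metis le_SucI of_nat_le_iff order.trans real_arch_simple)
  have "wit e (real (Suc j)) (P (Suc j)) (K (Suc j)) (L (Suc j))" using nxtok[OF vall[of j]] by blast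
  moreover have "agree (P (Suc j)) ks (K (Suc j))" "agree (P (Suc j)) ls (L (Suc j))"
    unfolding agree_def using ksK lsL by auto
  ultimately have "wit e (real (Suc j)) (P (Suc j)) ks ls" using wit_agree by blast
  then obtain a N where aN: "norm (\<Sum>n<N. a n *\<^sub>R e (ls n)) > real (Suc j) * norm (\<Sum>n<N. a n *\<^sub>R e (ks n))"
    unfolding wit_def by auto
  have "C * norm (\<Sum>n<N. a n *\<^sub>R e (ks n)) \<le> real (Suc j) * norm (\<Sum>n<N. a n *\<^sub>R e (ks n))"
    using j by (intro mult_right_mono) auto
  thus False using aN C(2)[of a N] by linarith
qed

lemma shift_sum:
  fixes f :: "nat \<Rightarrow> 'a::comm_monoid_add"
  shows "(\<Sum>n<N+p. (if n < p then 0 else f (n - p))) = (\<Sum>n<N. f n)"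
proof (induction N)
  case 0 thus ?case by simp
next
  case (Suc N)
  have "(\<Sum>n<Suc N + p. (if n < p then 0 else f (n - p))) = (\<Sum>n<N + p. (if n < p then 0 else f (n - p))) + f N"
    by simp
  thus ?case using Suc by simp
qed

lemma concat_mono:
  fixes k0 k :: "nat \<Rightarrow> nat"
  assumes k0: "strict_mono k0" and k: "strict_mono k" and lt: "k0 p < k 0"
  shows "strict_mono (\<lambda>n. if n < p then k0 n else k (n - p))"
proof (rule strict_mono_Suc_iff[THEN iffD2], intro allI)
  fix n
  consider "Suc n < p" | "Suc n = p" | "p \<le> n" by linarith
  thus "(if n < p then k0 n else k (n - p)) < (if Suc n < p then k0 (Suc n) else k (Suc n - p))"
  proof cases
    case 1 thus ?thesis using k0 by (simp add: strict_mono_def)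
  next
    case 2
    have "k0 n < k0 p" using k0 2 by (simp add: strict_mono_def)
    thus ?thesis using 2 lt by simp
  next
    case 3
    have "Suc n - p = Suc (n - p)" using 3 by simp
    thus ?thesis using 3 k by (simp add: strict_mono_def)
  qed
qed

lemma uniform_dom:
  fixes e :: "nat \<Rightarrow> 'a::real_normed_vector"
  assumes qs: "\<And>k l. valid k l \<Longrightarrow> dominates (e \<circ> k) (e \<circ> l)"
  shows "\<exists>B C. C > 0 \<and> (\<forall>k l a N. valid k l \<and> B \<le> k 0 \<longrightarrow>
           norm (\<Sum>n<N. a n *\<^sub>R e (l n)) \<le> C * norm (\<Sum>n<N. a n *\<^sub>R e (k n)))"
proof -
  obtain C p k0 l0 where C: "C > 0" and v0: "valid k0 l0" and
    good: "\<And>k l a N. valid k l \<Longrightarrow> agree p k k0 \<Longrightarrow> agree p l l0 \<Longrightarrow>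
           norm (\<Sum>n<N. a n *\<^sub>R e (l n)) \<le> C * norm (\<Sum>n<N. a n *\<^sub>R e (k n))"
    using step1[OF qs] by blast
  have "\<forall>k l a N. valid k l \<and> Suc (l0 p) \<le> k 0 \<longrightarrow>
           norm (\<Sum>n<N. a n *\<^sub>R e (l n)) \<le> C * norm (\<Sum>n<N. a n *\<^sub>R e (k n))"
  proof (intro allI impI)
    fix k l and a :: "nat \<Rightarrow> real" and N assume kl: "valid k l \<and> Suc (l0 p) \<le> k 0"
    define k' where "k' n = (if n < p then k0 n else k (n - p))" for n
    define l' where "l' n = (if n < p then l0 n else l (n - p))" for n
    define a' where "a' n = (if n < p then 0 else a (n - p))" for n
    have k0l0: "k0 p \<le> l0 p" using v0 unfolding valid_def by blast
    have l0p: "l0 p < k 0" using kl by simp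
    have "k 0 \<le> l 0" using kl unfolding valid_def by blast
    have v': "valid k' l'"
      unfolding valid_def
    proof (intro conjI allI)
      show "strict_mono k'" unfolding k'_def
        using concat_mono[of k0 k p] v0 kl k0l0 l0p unfolding valid_def by simp
      show "strict_mono l'" unfolding l'_def
        using concat_mono[of l0 l p] v0 kl l0p \<open>k 0 \<le> l 0\<close> unfolding valid_def by simp
      fix n show "k' n \<le> l' n" using v0 kl unfolding valid_def k'_def l'_def by simp
    qed
    have ag: "agree p k' k0" "agree p l' l0" unfolding agree_def k'_def l'_def by auto
    have sk: "(\<Sum>n<N+p. a' n *\<^sub>R e (k' n)) = (\<Sum>n<N. a n *\<^sub>R e (k n))"
    proof -
      have "(\<Sum>n<N+p. a' n *\<^sub>R e (k' n)) = (\<Sum>n<N+p. (if n < p then 0 else a (n - p) *\<^sub>R e (k (n - p))))"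
        unfolding a'_def k'_def by (intro sum.cong) auto
      thus ?thesis using shift_sum[where N=N and p=p and f="\<lambda>n. a n *\<^sub>R e (k n)"] by simp
    qed
    have sl: "(\<Sum>n<N+p. a' n *\<^sub>R e (l' n)) = (\<Sum>n<N. a n *\<^sub>R e (l n))"
    proof -
      have "(\<Sum>n<N+p. a' n *\<^sub>R e (l' n)) = (\<Sum>n<N+p. (if n < p then 0 else a (n - p) *\<^sub>R e (l (n - p))))"
        unfolding a'_def l'_def by (intro sum.cong) auto
      thus ?thesis using shift_sum[where N=N and p=p and f="\<lambda>n. a n *\<^sub>R e (l n)"] by simp
    qed
    show "norm (\<Sum>n<N. a n *\<^sub>R e (l n)) \<le> C * norm (\<Sum>n<N. a n *\<^sub>R e (k n))"
      using good[OF v' ag, of a' "N+p"] sk sl by simp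
  qed
  thus ?thesis using C by blast
qed


lemma closure_span_add:
  fixes S :: "'a::real_normed_vector set"
  assumes "x \<in> closure (span S)" "y \<in> closure (span S)"
  shows "x + y \<in> closure (span S)"
proof -
  obtain v where v: "\<And>t. v t \<in> span S" "v \<longlonglongrightarrow> x" using assms(1) unfolding closure_sequential by blast
  obtain w where w: "\<And>t. w t \<in> span S" "w \<longlonglongrightarrow> y" using assms(2) unfolding closure_sequential by blast
  show ?thesis unfolding closure_sequential
  proof (rule exI[of _ "\<lambda>t. v t + w t"], intro conjI allI)
    fix t show "v t + w t \<in> span S" using v w span_add by blast
  next
    show "(\<lambda>t. v t + w t) \<longlonglongrightarrow> x + y" using v w by (intro tendsto_intros)
  qed
qed

lemma closure_span_scale:
  fixes S :: "'a::real_normed_vector set"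
  assumes "x \<in> closure (span S)"
  shows "c *\<^sub>R x \<in> closure (span S)"
proof -
  obtain v where v: "\<And>t. v t \<in> span S" "v \<longlonglongrightarrow> x" using assms(1) unfolding closure_sequential by blast
  show ?thesis unfolding closure_sequential
  proof (rule exI[of _ "\<lambda>t. c *\<^sub>R v t"], intro conjI allI)
    fix t show "c *\<^sub>R v t \<in> span S" using v span_scale by blast
  next
    show "(\<lambda>t. c *\<^sub>R v t) \<longlonglongrightarrow> c *\<^sub>R x" using v by (intro tendsto_intros)
  qed
qed

locale bbasis =
  fixes e :: "nat \<Rightarrow> 'a::banach" and \<mu> :: real
  assumes basic: "basic_seq e" and mupos: "\<mu> > 0" and elow: "\<And>n. \<mu> \<le> norm (e n)"
begin

abbreviation "Y \<equiv> closure (span (range e))"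

definition coef :: "'a \<Rightarrow> nat \<Rightarrow> real" where
  "coef x = (THE a. (\<lambda>N. \<Sum>i<N. a i *\<^sub>R e i) \<longlonglongrightarrow> x)"

definition P :: "nat \<Rightarrow> 'a \<Rightarrow> 'a" where
  "P n x = (\<Sum>i<n. coef x i *\<^sub>R e i)"

lemma Y_add: "x \<in> Y \<Longrightarrow> y \<in> Y \<Longrightarrow> x + y \<in> Y" by (rule closure_span_add)
lemma Y_scale: "x \<in> Y \<Longrightarrow> c *\<^sub>R x \<in> Y" by (rule closure_span_scale)
lemma Y_zero: "0 \<in> Y" by (meson closure_subset span_zero subsetD)
lemma Y_diff: "x \<in> Y \<Longrightarrow> y \<in> Y \<Longrightarrow> x - y \<in> Y"
  using Y_add[of x "(-1) *\<^sub>R y"] Y_scale[of y "-1"] by simp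

lemma ex1coef: "x \<in> Y \<Longrightarrow> \<exists>!a. (\<lambda>N. \<Sum>i<N. a i *\<^sub>R e i) \<longlonglongrightarrow> x"
  using basic unfolding basic_seq_def by blast

lemma P_lim: "x \<in> Y \<Longrightarrow> (\<lambda>n. P n x) \<longlonglongrightarrow> x"
  unfolding P_def coef_def by (rule theI'[OF ex1coef])

lemma coef_eq: "x \<in> Y \<Longrightarrow> (\<lambda>N. \<Sum>i<N. a i *\<^sub>R e i) \<longlonglongrightarrow> x \<Longrightarrow> coef x = a"
  unfolding coef_def by (rule the1_equality[OF ex1coef])

lemma coef_add: "x \<in> Y \<Longrightarrow> y \<in> Y \<Longrightarrow> coef (x + y) = (\<lambda>i. coef x i + coef y i)"
proof -
  assume xy: "x \<in> Y" "y \<in> Y"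
  have "(\<lambda>N. P N x + P N y) \<longlonglongrightarrow> x + y" by (intro tendsto_add P_lim xy)
  hence "(\<lambda>N. \<Sum>i<N. (coef x i + coef y i) *\<^sub>R e i) \<longlonglongrightarrow> x + y"
    unfolding P_def by (simp add: scaleR_add_left sum.distrib)
  thus ?thesis by (rule coef_eq[OF Y_add[OF xy]])
qed

lemma coef_scale: "x \<in> Y \<Longrightarrow> coef (c *\<^sub>R x) = (\<lambda>i. c * coef x i)"
proof -
  assume x: "x \<in> Y"
  have "(\<lambda>N. c *\<^sub>R P N x) \<longlonglongrightarrow> c *\<^sub>R x" by (intro tendsto_scaleR tendsto_const P_lim x)
  hence "(\<lambda>N. \<Sum>i<N. (c * coef x i) *\<^sub>R e i) \<longlonglongrightarrow> c *\<^sub>R x"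
    unfolding P_def by (simp add: scaleR_sum_right)
  thus ?thesis by (rule coef_eq[OF Y_scale[OF x]])
qed

lemma P_add: "x \<in> Y \<Longrightarrow> y \<in> Y \<Longrightarrow> P n (x + y) = P n x + P n y"
  unfolding P_def by (simp add: coef_add scaleR_add_left sum.distrib)

lemma P_scale: "x \<in> Y \<Longrightarrow> P n (c *\<^sub>R x) = c *\<^sub>R P n x"
  unfolding P_def by (simp add: coef_scale scaleR_sum_right)

lemma P_zero: "P n 0 = 0"
  using P_scale[OF Y_zero, of n 0] by simp

lemma P_diff: "x \<in> Y \<Longrightarrow> y \<in> Y \<Longrightarrow> P n (x - y) = P n x - P n y"
  using P_add[of x "(-1) *\<^sub>R y" n] P_scale[of y n "-1"] Y_scale[of y "-1"] by simp

lemma coef_of_P: "\<bar>coef x i\<bar> * \<mu> \<le> norm (P (Suc i) x - P i x)"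
proof -
  have "P (Suc i) x - P i x = coef x i *\<^sub>R e i" unfolding P_def by simp
  moreover have "\<bar>coef x i\<bar> * \<mu> \<le> \<bar>coef x i\<bar> * norm (e i)" using elow by (simp add: mult_left_mono)
  ultimately show ?thesis by simp
qed

end

context bbasis begin

lemma Y_closed: "closed Y" by simp

lemma CL:
  assumes zY: "\<And>J. z J \<in> Y" and zlim: "z \<longlonglongrightarrow> x" and eps: "\<epsilon> \<longlonglongrightarrow> 0"
    and cau: "\<And>n J J'. J \<le> J' \<Longrightarrow> norm (P n (z J') - P n (z J)) \<le> \<epsilon> J"
    and bnd: "\<And>n J. norm (P n (z J)) \<le> T"
  shows "norm (P n x) \<le> T"
proof -
  have xY: "x \<in> Y" using closed_sequentially[OF Y_closed _ zlim] zY by blast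
  have cdiff: "\<bar>coef (z J') i - coef (z J) i\<bar> * \<mu> \<le> 2 * \<epsilon> J" if "J \<le> J'" for J J' i
  proof -
    have h1: "P (Suc i) w = P i w + coef w i *\<^sub>R e i" for w unfolding P_def by simp
    have "P (Suc i) (z J') - P (Suc i) (z J) - (P i (z J') - P i (z J)) = (coef (z J') i - coef (z J) i) *\<^sub>R e i"
      unfolding h1 by (simp add: scaleR_diff_left)
    hence "norm (P (Suc i) (z J') - P (Suc i) (z J) - (P i (z J') - P i (z J))) = \<bar>coef (z J') i - coef (z J) i\<bar> * norm (e i)"
      by simp
    moreover have "\<bar>coef (z J') i - coef (z J) i\<bar> * \<mu> \<le> \<bar>coef (z J') i - coef (z J) i\<bar> * norm (e i)"
      using elow by (simp add: mult_left_mono)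
    moreover have "norm (P (Suc i) (z J') - P (Suc i) (z J) - (P i (z J') - P i (z J))) \<le> 2 * \<epsilon> J"
      using norm_triangle_ineq4[of "P (Suc i) (z J') - P (Suc i) (z J)" "P i (z J') - P i (z J)"]
        cau[OF that, of "Suc i"] cau[OF that, of i] by linarith
    ultimately show ?thesis by linarith
  qed
  have conv: "convergent (\<lambda>J. coef (z J) i)" for i
  proof (rule real_Cauchy_convergent, rule metric_CauchyI)
    fix r :: real assume r: "r > 0"
    obtain J0 where J0: "\<forall>J\<ge>J0. norm (\<epsilon> J - 0) < r * \<mu> / 4"
      using LIMSEQ_D[OF eps, of "r * \<mu> / 4"] r mupos by auto
    show "\<exists>M. \<forall>s\<ge>M. \<forall>t\<ge>M. dist (coef (z s) i) (coef (z t) i) < r"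
    proof (intro exI allI impI)
      fix s t assume st: "s \<ge> J0" "t \<ge> J0"
      have e0: "\<epsilon> J0 < r * \<mu> / 4" using J0 by auto
      have "\<bar>coef (z s) i - coef (z J0) i\<bar> * \<mu> \<le> 2 * \<epsilon> J0" using cdiff st by blast
      moreover have "\<bar>coef (z t) i - coef (z J0) i\<bar> * \<mu> \<le> 2 * \<epsilon> J0" using cdiff st by blast
      ultimately have "(\<bar>coef (z s) i - coef (z J0) i\<bar> + \<bar>coef (z t) i - coef (z J0) i\<bar>) * \<mu> < r * \<mu>"
        using e0 by (simp add: algebra_simps)
      hence "\<bar>coef (z s) i - coef (z J0) i\<bar> + \<bar>coef (z t) i - coef (z J0) i\<bar> < r"
        using mupos by simp
      thus "dist (coef (z s) i) (coef (z t) i) < r" unfolding dist_real_def by linarith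
    qed
  qed
  hence exl: "\<forall>i. \<exists>l. (\<lambda>J. coef (z J) i) \<longlonglongrightarrow> l" unfolding convergent_def by blast
  obtain \<alpha> where \<alpha>: "\<And>i. (\<lambda>J. coef (z J) i) \<longlonglongrightarrow> \<alpha> i" using choice[OF exl] by blast
  define w where "w n = (\<Sum>i<n. \<alpha> i *\<^sub>R e i)" for n
  have Pw: "(\<lambda>J. P n (z J)) \<longlonglongrightarrow> w n" for n
    unfolding P_def w_def by (intro tendsto_sum tendsto_scaleR \<alpha> tendsto_const)
  have wz: "norm (w n - P n (z J)) \<le> \<epsilon> J" for n J
  proof (rule LIMSEQ_le_const2)
    show "(\<lambda>J'. norm (P n (z J') - P n (z J))) \<longlonglongrightarrow> norm (w n - P n (z J))"
      by (intro tendsto_norm tendsto_diff Pw tendsto_const)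
    show "\<exists>N. \<forall>J'\<ge>N. norm (P n (z J') - P n (z J)) \<le> \<epsilon> J" using cau by blast
  qed
  have epos: "\<epsilon> J \<ge> 0" for J using cau[of J J 0] by simp
  have wx: "w \<longlonglongrightarrow> x"
  proof (rule LIMSEQ_I)
    fix r :: real assume r: "r > 0"
    define \<eta> where "\<eta> = r / 3"
    have \<eta>: "\<eta> > 0" using r by (simp add: \<eta>_def)
    obtain J1 where J1: "\<forall>J\<ge>J1. norm (\<epsilon> J - 0) < \<eta>" using LIMSEQ_D[OF eps \<eta>] by auto
    obtain J2 where J2: "\<forall>J\<ge>J2. norm (z J - x) < \<eta>" using LIMSEQ_D[OF zlim \<eta>] by auto
    define J where "J = max J1 J2"
    have eJ: "\<epsilon> J < \<eta>"
    proof -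
      have "\<bar>\<epsilon> J\<bar> < \<eta>" using J1 J_def by simp
      thus ?thesis by linarith
    qed
    have zJ: "norm (z J - x) < \<eta>" using J2 J_def by auto
    obtain n0 where n0: "\<forall>n\<ge>n0. norm (P n (z J) - z J) < \<eta>" using LIMSEQ_D[OF P_lim[OF zY] \<eta>] by blast
    show "\<exists>n0. \<forall>n\<ge>n0. norm (w n - x) < r"
    proof (intro exI allI impI)
      fix n assume "n \<ge> n0"
      hence a: "norm (P n (z J) - z J) < \<eta>" using n0 by blast
      have "norm (w n - x) \<le> norm ((w n - P n (z J)) + (P n (z J) - z J)) + norm (z J - x)"
        using norm_triangle_ineq[of "(w n - P n (z J)) + (P n (z J) - z J)" "z J - x"] by simp
      also have "\<dots> \<le> norm (w n - P n (z J)) + norm (P n (z J) - z J) + norm (z J - x)"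
        using norm_triangle_ineq[of "w n - P n (z J)" "P n (z J) - z J"] by simp
      finally have "norm (w n - x) \<le> norm (w n - P n (z J)) + norm (P n (z J) - z J) + norm (z J - x)" .
      thus "norm (w n - x) < r" using a zJ eJ wz[of n J] unfolding \<eta>_def by linarith
    qed
  qed
  have "coef x = \<alpha>" using coef_eq[OF xY] wx unfolding w_def by blast
  hence "P n x = w n" unfolding P_def w_def by simp
  moreover have "norm (w n) \<le> T"
  proof (rule LIMSEQ_le_const2)
    show "(\<lambda>J. norm (P n (z J))) \<longlonglongrightarrow> norm (w n)" by (intro tendsto_norm Pw)
    show "\<exists>N. \<forall>J\<ge>N. norm (P n (z J)) \<le> T" using bnd by blast
  qed
  ultimately show ?thesis by simp
qed

end

context bbasis begin

definition Sm :: "nat \<Rightarrow> 'a set" where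
  "Sm m = {x \<in> Y. \<forall>n. norm (P n x) \<le> real m}"

lemma Sm_sub: "closure (Sm m) \<subseteq> Y"
proof -
  have "Sm m \<subseteq> Y" unfolding Sm_def by auto
  hence "closure (Sm m) \<subseteq> closure Y" by (rule closure_mono)
  thus ?thesis by simp
qed

lemma Y_cover: "Y \<subseteq> (\<Union>m. closure (Sm m))"
proof
  fix x assume x: "x \<in> Y"
  have "convergent (\<lambda>n. P n x)" using P_lim[OF x] unfolding convergent_def by blast
  hence "Bseq (\<lambda>n. P n x)" by (rule convergent_imp_Bseq)
  then obtain B where B: "\<forall>n. norm (P n x) \<le> B" unfolding Bseq_def by auto
  obtain m where m: "B \<le> real m" using real_arch_simple by blast
  have "x \<in> Sm m" unfolding Sm_def using x B m by (auto intro: order_trans)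
  thus "x \<in> (\<Union>m. closure (Sm m))" using closure_subset by blast
qed

lemma baire_ball: "\<exists>m x0 r. r > 0 \<and> x0 \<in> Y \<and> ball x0 r \<inter> Y \<subseteq> closure (Sm m)"
proof -
  let ?X = "top_of_set Y"
  let ?G = "range (\<lambda>m. closure (Sm m))"
  have cm: "completely_metrizable_space ?X"
    by (rule completely_metrizable_space_closedin[OF completely_metrizable_space_euclidean]) simp
  have cnt: "countable ?G" by simp
  have cl: "closedin ?X T" if TG: "T \<in> ?G" for T
  proof -
    obtain m where T: "T = closure (Sm m)" using TG by blast
    show ?thesis unfolding closedin_closed T using Sm_sub by (intro exI[of _ "closure (Sm m)"]) auto
  qed
  have un: "\<Union>?G = Y" using Y_cover Sm_sub by blast
  have "?X interior_of \<Union>?G = Y" unfolding un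
    using interior_of_topspace[of ?X] by simp
  hence "?X interior_of \<Union>?G \<noteq> {}" using Y_zero by auto
  hence "\<not> (\<forall>T\<in>?G. closedin ?X T \<and> ?X interior_of T = {})"
    using Baire_category_alt[OF disjI1[OF cm] cnt] by blast
  then obtain T where T1: "T \<in> ?G" and T2: "\<not> (closedin ?X T \<and> ?X interior_of T = {})" by blast
  have T: "T \<in> ?G" "?X interior_of T \<noteq> {}" using T1 T2 cl[OF T1] by auto
  have "\<not> (\<forall>U. openin ?X U \<and> U \<subseteq> T \<longrightarrow> U = {})" using T(2) unfolding interior_of_eq_empty .
  then obtain U where U: "openin ?X U" "U \<subseteq> T" "U \<noteq> {}" by blast
  obtain x0 where x0: "x0 \<in> U" using U by blast
  obtain r where r: "r > 0" "ball x0 r \<inter> Y \<subseteq> U" using U(1) x0 unfolding openin_contains_ball by blast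
  obtain m where "T = closure (Sm m)" using T by blast
  moreover have "x0 \<in> Y" using U(1) x0 openin_subset by fastforce
  ultimately show ?thesis using r U by blast
qed

lemma approx:
  assumes br: "ball x0 r \<inter> Y \<subseteq> closure (Sm m)" and x0Y: "x0 \<in> Y" and z: "z \<in> Y" "norm z < r" and eps: "\<epsilon> > 0"
  shows "\<exists>s\<in>Sm m. norm (z - s) < \<epsilon>"
proof -
  have "x0 + z \<in> closure (Sm m)" using br z x0Y Y_add by (auto simp: dist_norm)
  then obtain s1 where s1: "s1 \<in> Sm m" "dist s1 (x0 + z) < \<epsilon>" using eps unfolding closure_approachable by blast
  have "x0 - z \<in> closure (Sm m)" using br z x0Y Y_diff by (auto simp: dist_norm)
  then obtain s2 where s2: "s2 \<in> Sm m" "dist s2 (x0 - z) < \<epsilon>" using eps unfolding closure_approachable by blast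
  define s where "s = (1/2) *\<^sub>R (s1 - s2)"
  have s1Y: "s1 \<in> Y" and s2Y: "s2 \<in> Y" using s1 s2 unfolding Sm_def by auto
  have sY: "s \<in> Y" unfolding s_def using Y_scale Y_diff s1Y s2Y by blast
  have "norm (P n s) \<le> real m" for n
  proof -
    have "P n s = (1/2) *\<^sub>R (P n s1 - P n s2)" unfolding s_def using P_scale P_diff s1Y s2Y Y_diff by simp
    moreover have "norm (P n s1 - P n s2) \<le> real m + real m"
    proof -
      have "norm (P n s1) \<le> real m" "norm (P n s2) \<le> real m" using s1(1) s2(1) unfolding Sm_def by auto
      thus ?thesis using norm_triangle_ineq4[of "P n s1" "P n s2"] by linarith
    qed
    ultimately show ?thesis by simp
  qed
  hence "s \<in> Sm m" unfolding Sm_def using sY by auto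
  moreover have "norm (z - s) < \<epsilon>"
  proof -
    have "(x0 + z - s1) - (x0 - z - s2) = 2 *\<^sub>R z - (s1 - s2)" by (simp add: scaleR_2 algebra_simps)
    moreover have h2: "(1/2) *\<^sub>R (2 *\<^sub>R z) = z" by simp
    have "z - s = (1/2) *\<^sub>R (2 *\<^sub>R z - (s1 - s2))" by (simp only: scaleR_diff_right h2 s_def)
    ultimately have "z - s = (1/2) *\<^sub>R ((x0 + z - s1) - (x0 - z - s2))" by simp
    moreover have "norm ((x0 + z - s1) - (x0 - z - s2)) < \<epsilon> + \<epsilon>"
      using norm_triangle_ineq4[of "x0 + z - s1" "x0 - z - s2"] s1(2) s2(2)
      by (simp add: dist_norm norm_minus_commute)
    ultimately show ?thesis by simp
  qed
  ultimately show ?thesis by blast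
qed

end

context bbasis begin

lemma scaled: "\<exists>L>0. \<forall>z\<in>Y. \<exists>s\<in>Y. (\<forall>n. norm (P n s) \<le> L * norm z) \<and> norm (z - s) \<le> norm z / 2"
proof -
  obtain m x0 r where r: "r > 0" and x0: "x0 \<in> Y" and br: "ball x0 r \<inter> Y \<subseteq> closure (Sm m)"
    using baire_ball by blast
  define L where "L = 2 * (real m + 1) / r"
  have L: "L > 0" unfolding L_def using r by simp
  have "\<forall>z\<in>Y. \<exists>s\<in>Y. (\<forall>n. norm (P n s) \<le> L * norm z) \<and> norm (z - s) \<le> norm z / 2"
  proof
    fix z assume zY: "z \<in> Y"
    show "\<exists>s\<in>Y. (\<forall>n. norm (P n s) \<le> L * norm z) \<and> norm (z - s) \<le> norm z / 2"
    proof (cases "z = 0")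
      case True
      thus ?thesis using Y_zero P_zero by (intro bexI[of _ 0]) auto
    next
      case False
      hence nz: "norm z > 0" by simp
      define t where "t = r / (2 * norm z)"
      have t: "t > 0" unfolding t_def using r nz by simp
      define w where "w = t *\<^sub>R z"
      have wY: "w \<in> Y" unfolding w_def using Y_scale zY by blast
      have nw: "norm w = r / 2" unfolding w_def t_def using nz r by simp
      obtain s' where s': "s' \<in> Sm m" "norm (w - s') < r / 4"
        using approx[OF br x0 wY, of "r/4"] nw r by auto
      have s'Y: "s' \<in> Y" using s' unfolding Sm_def by auto
      define s where "s = (1 / t) *\<^sub>R s'"
      have sY: "s \<in> Y" unfolding s_def using Y_scale s'Y by blast
      have "norm (P n s) \<le> L * norm z" for n
      proof -
        have "P n s = (1/t) *\<^sub>R P n s'" unfolding s_def using P_scale s'Y by blast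
        hence "norm (P n s) = norm (P n s') / t" using t by simp
        also have "\<dots> \<le> real m / t" using s'(1) t unfolding Sm_def by (simp add: divide_right_mono)
        also have "\<dots> = 2 * real m * norm z / r" unfolding t_def using r nz by simp
        also have "\<dots> \<le> L * norm z" unfolding L_def using r nz by (simp add: field_simps)
        finally show ?thesis .
      qed
      moreover have "norm (z - s) \<le> norm z / 2"
      proof -
        have "z - s = (1/t) *\<^sub>R (w - s')" unfolding s_def w_def using t by (simp add: scaleR_diff_right)
        hence "norm (z - s) = norm (w - s') / t" using t by simp
        also have "\<dots> \<le> (r / 4) / t" using s'(2) t by (intro divide_right_mono) auto
        also have "\<dots> = norm z / 2" unfolding t_def using r nz by simp
        finally show ?thesis .
      qed
      ultimately show ?thesis using sY by blast
    qed
  qed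
  thus ?thesis using L by blast
qed

lemma banach_P: "\<exists>C>0. \<forall>z\<in>Y. \<forall>n. norm (P n z) \<le> C * norm z"
proof -
  obtain L where L: "L > 0" and Lp: "\<forall>z\<in>Y. \<exists>s\<in>Y. (\<forall>n. norm (P n s) \<le> L * norm z) \<and> norm (z - s) \<le> norm z / 2"
    using scaled by blast
  have "\<forall>z\<in>Y. \<exists>s. s \<in> Y \<and> (\<forall>n. norm (P n s) \<le> L * norm z) \<and> norm (z - s) \<le> norm z / 2"
    using Lp by blast
  from bchoice[OF this] obtain f where f0: "\<forall>z\<in>Y. f z \<in> Y \<and> (\<forall>n. norm (P n (f z)) \<le> L * norm z) \<and> norm (z - f z) \<le> norm z / 2"
    by blast
  have f: "\<And>z. z \<in> Y \<Longrightarrow> f z \<in> Y \<and> (\<forall>n. norm (P n (f z)) \<le> L * norm z) \<and> norm (z - f z) \<le> norm z / 2"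
    using f0 by blast
  have "\<forall>z\<in>Y. \<forall>n. norm (P n z) \<le> (2 * L) * norm z"
  proof (intro ballI allI)
    fix z n assume zY: "z \<in> Y"
    define g where "g y = y - f y" for y
    define r where "r j = (g ^^ j) z" for j
    have r0: "r 0 = z" unfolding r_def by simp
    have rS: "r (Suc j) = r j - f (r j)" for j unfolding r_def g_def by simp
    have rY: "r j \<in> Y" for j
    proof (induction j)
      case 0 thus ?case using r0 zY by simp
    next
      case (Suc j) thus ?case using rS Y_diff f by simp
    qed
    have rn: "norm (r j) \<le> (1/2)^j * norm z" for j
    proof (induction j)
      case 0 thus ?case using r0 by simp
    next
      case (Suc j)
      have "norm (r (Suc j)) \<le> norm (r j) / 2" using rS f[OF rY[of j]] by simp
      thus ?case using Suc by simp
    qed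
    define zz where "zz J = (\<Sum>j<J. f (r j))" for J
    have zzeq: "zz J = z - r J" for J
    proof (induction J)
      case 0 thus ?case using r0 unfolding zz_def by simp
    next
      case (Suc J) thus ?case unfolding zz_def using rS by simp
    qed
    have zzY: "zz J \<in> Y" for J using zzeq Y_diff zY rY by simp
    have rlim: "r \<longlonglongrightarrow> 0"
    proof (rule Lim_null_comparison)
      show "\<forall>\<^sub>F J in sequentially. norm (r J) \<le> (1/2)^J * norm z" using rn by simp
      show "(\<lambda>J. (1/2::real)^J * norm z) \<longlonglongrightarrow> 0"
        by (intro tendsto_mult_left_zero LIMSEQ_power_zero) simp
    qed
    have zzlim: "zz \<longlonglongrightarrow> z"
    proof -
      have "(\<lambda>J. z - r J) \<longlonglongrightarrow> z - 0" by (intro tendsto_diff tendsto_const rlim)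
      moreover have "zz = (\<lambda>J. z - r J)" using zzeq by (intro ext) 
      ultimately show ?thesis by simp
    qed
    have PS: "P m (zz (Suc J)) = P m (zz J) + P m (f (r J))" for m J
    proof -
      have "zz (Suc J) = zz J + f (r J)" unfolding zz_def by simp
      thus ?thesis using P_add zzY f[OF rY[of J]] by simp
    qed
    have Pf: "norm (P m (f (r j))) \<le> L * ((1/2)^j * norm z)" for m j
    proof -
      have "norm (P m (f (r j))) \<le> L * norm (r j)" using f[OF rY[of j]] by blast
      also have "\<dots> \<le> L * ((1/2)^j * norm z)" using rn L by (intro mult_left_mono) auto
      finally show ?thesis .
    qed
    have strong: "norm (P m (zz (J + d)) - P m (zz J)) \<le> 2 * L * norm z * ((1/2)^J - (1/2)^(J+d))" for m J d
    proof (induction d)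
      case 0 thus ?case by simp
    next
      case (Suc d)
      have "P m (zz (J + Suc d)) - P m (zz J) = (P m (zz (J + d)) - P m (zz J)) + P m (f (r (J + d)))"
        using PS[of m "J + d"] by simp
      hence "norm (P m (zz (J + Suc d)) - P m (zz J)) \<le> norm (P m (zz (J + d)) - P m (zz J)) + norm (P m (f (r (J + d))))"
        using norm_triangle_ineq by metis
      also have "\<dots> \<le> 2 * L * norm z * ((1/2)^J - (1/2)^(J+d)) + L * ((1/2)^(J+d) * norm z)"
        using Suc Pf[of m "J + d"] by linarith
      also have "\<dots> = 2 * L * norm z * ((1/2)^J - (1/2)^(J + Suc d))"
      proof -
        have "(1/2::real)^(J + Suc d) = (1/2)^(J+d) / 2" by simp
        thus ?thesis by (simp add: algebra_simps)
      qed
      finally show ?case .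
    qed
    have LZ: "0 \<le> 2 * L * norm z" using L by (intro mult_nonneg_nonneg) auto
    have cau: "norm (P m (zz J') - P m (zz J)) \<le> 2 * L * norm z * (1/2)^J" if JJ: "J \<le> J'" for m J J'
    proof -
      obtain d where d: "J' = J + d" using le_Suc_ex[OF JJ] by blast
      have "2 * L * norm z * ((1/2)^J - (1/2)^(J+d)) \<le> 2 * L * norm z * (1/2)^J"
        using LZ by (intro mult_left_mono) auto
      thus ?thesis using strong[of m J d] unfolding d by linarith
    qed
    have bnd: "norm (P m (zz J)) \<le> 2 * L * norm z" for m J
    proof -
      have "zz 0 = 0" unfolding zz_def by simp
      hence "norm (P m (zz J)) = norm (P m (zz (0 + J)) - P m (zz 0))" using P_zero by simp
      also have "\<dots> \<le> 2 * L * norm z * ((1/2)^0 - (1/2)^(0+J))" by (rule strong)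
      also have "\<dots> \<le> 2 * L * norm z" using LZ by (simp add: mult_left_le)
      finally show ?thesis .
    qed
    have eps: "(\<lambda>J. 2 * L * norm z * (1/2::real)^J) \<longlonglongrightarrow> 0"
      by (intro tendsto_mult_right_zero LIMSEQ_power_zero) simp
    show "norm (P n z) \<le> (2 * L) * norm z"
      using CL[OF zzY zzlim eps cau bnd] by simp
  qed
  thus ?thesis using L by (intro exI[of _ "2 * L"]) auto
qed

lemma banach_const: "\<exists>C>0. \<forall>a m N. m \<le> N \<longrightarrow> norm (\<Sum>i<m. a i *\<^sub>R e i) \<le> C * norm (\<Sum>i<N. a i *\<^sub>R e i)"
proof -
  obtain C where C: "C > 0" "\<forall>z\<in>Y. \<forall>n. norm (P n z) \<le> C * norm z" using banach_P by blast
  have "norm (\<Sum>i<m. a i *\<^sub>R e i) \<le> C * norm (\<Sum>i<N. a i *\<^sub>R e i)" if mN: "m \<le> N" for a m N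
  proof -
    define v where "v = (\<Sum>i<N. a i *\<^sub>R e i)"
    have "v \<in> span (range e)" unfolding v_def by (intro span_sum span_scale span_base) auto
    hence vY: "v \<in> Y" using closure_subset by blast
    define a' where "a' i = (if i < N then a i else 0)" for i
    have "(\<lambda>M. \<Sum>i<M. a' i *\<^sub>R e i) \<longlonglongrightarrow> v"
    proof (rule tendsto_eventually)
      have "(\<Sum>i<M. a' i *\<^sub>R e i) = v" if "M \<ge> N" for M
      proof -
        have "(\<Sum>i<M. a' i *\<^sub>R e i) = (\<Sum>i<N. a' i *\<^sub>R e i)"
          using that by (intro sum.mono_neutral_right) (auto simp: a'_def)
        thus ?thesis unfolding v_def a'_def by simp
      qed
      thus "\<forall>\<^sub>F M in sequentially. (\<Sum>i<M. a' i *\<^sub>R e i) = v"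
        using eventually_sequentially by blast
    qed
    hence "coef v = a'" using coef_eq vY by blast
    hence "P m v = (\<Sum>i<m. a i *\<^sub>R e i)" unfolding P_def a'_def using mN by (intro sum.cong) auto
    thus ?thesis using C vY unfolding v_def by metis
  qed
  thus ?thesis using C by blast
qed

end

locale mainsetup =
  fixes e :: "nat \<Rightarrow> 'a::real_normed_vector" and B :: nat and C Me \<delta> :: real and L :: nat
  assumes Cpos: "C > 0" and dpos: "\<delta> > 0" and Lpos: "L > 0"
    and Mb: "\<And>n. norm (e n) \<le> Me" and Lbig: "2 * Me / real L \<le> \<delta> / 2"
    and unif: "\<And>k l a N. valid k l \<Longrightarrow> B \<le> k 0 \<Longrightarrow>
        norm (\<Sum>n<N. a n *\<^sub>R e (l n)) \<le> C * norm (\<Sum>n<N. a n *\<^sub>R e (k n))"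
    and sep: "\<And>p q. p < q \<Longrightarrow> \<delta> \<le> norm (e q - e p)"
begin

definition kk :: "nat \<Rightarrow> nat" where "kk n = B + L * 4 ^ n"
definition mm :: "nat \<Rightarrow> nat" where "mm j = L * 2 ^ Suc j"
definition d :: "nat \<Rightarrow> 'a" where "d j = e (kk (2*j+1)) - e (kk (2*j))"

lemma kk_mono: "strict_mono kk"
  unfolding strict_mono_def kk_def using Lpos by (auto intro: power_strict_increasing)

lemma gap: "kk (2*j+1) + mm j < kk (2*j+2)"
proof -
  have a: "(2::nat) ^ Suc j \<le> 2 ^ (4*j+2)" by (intro power_increasing) auto
  have b: "(4::nat) ^ (2*j+1) = 2 ^ (4*j+2)"
  proof -
    have "(4::nat) ^ (2*j+1) = (2^2) ^ (2*j+1)" by simp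
    also have "\<dots> = 2 ^ (2 * (2*j+1))" by (simp only: power_mult)
    finally show ?thesis by simp
  qed
  have c: "(4::nat) ^ (2*j+2) = 4 * 4 ^ (2*j+1)" by simp
  have p: "(0::nat) < 2 ^ (4*j+2)" by simp
  have "(2::nat) ^ Suc j < 3 * 4 ^ (2*j+1)" unfolding b using a p by linarith
  hence "L * 2 ^ Suc j < L * (3 * 4 ^ (2*j+1))" using Lpos by simp
  thus ?thesis unfolding kk_def mm_def c by (simp add: algebra_simps)
qed

lemma mm_pos: "mm j > 0" unfolding mm_def using Lpos by simp

definition lsig :: "nat set \<Rightarrow> (nat \<Rightarrow> nat) \<Rightarrow> nat \<Rightarrow> nat" where
  "lsig G \<sigma> n = (if n div 2 \<in> G then kk (2 * (n div 2) + 1) + \<sigma> (n div 2) + n mod 2 else kk n)"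

lemma lsig_even: "lsig G \<sigma> (2*j) = (if j \<in> G then kk (2*j+1) + \<sigma> j else kk (2*j))"
  unfolding lsig_def by simp

lemma lsig_odd: "lsig G \<sigma> (2*j+1) = (if j \<in> G then kk (2*j+1) + \<sigma> j + 1 else kk (2*j+1))"
  unfolding lsig_def by simp

lemma lsig_odd2: "lsig G \<sigma> (Suc (2*j)) = (if j \<in> G then Suc (kk (Suc (2*j)) + \<sigma> j) else kk (Suc (2*j)))"
  using lsig_odd[of G \<sigma> j] by simp

lemma lsig_valid:
  assumes \<sigma>: "\<forall>j\<in>G. \<sigma> j < mm j"
  shows "valid kk (lsig G \<sigma>)"
  unfolding valid_def
proof (intro conjI allI kk_mono)
  have km: "kk a < kk b" if "a < b" for a b using kk_mono that by (simp add: strict_mono_def)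
  show "strict_mono (lsig G \<sigma>)"
  proof (rule strict_mono_Suc_iff[THEN iffD2], intro allI)
    fix n :: nat
    have "\<exists>j::nat. n = 2*j \<or> n = 2*j+1" by presburger
    then obtain j where "n = 2*j \<or> n = 2*j+1" by blast
    thus "lsig G \<sigma> n < lsig G \<sigma> (Suc n)"
    proof
      assume n: "n = 2*j"
      have "Suc n = 2*j+1" using n by simp
      thus ?thesis unfolding n using lsig_even[of G \<sigma> j] lsig_odd[of G \<sigma> j] km[of "2*j" "2*j+1"] by simp
    next
      assume n: "n = 2*j+1"
      have sn: "Suc n = 2*(Suc j)" using n by simp
      have up: "lsig G \<sigma> (2*j+1) \<le> kk (2*j+1) + mm j"
        using lsig_odd[of G \<sigma> j] \<sigma> by auto
      have lo: "kk (2*j+2) \<le> lsig G \<sigma> (2*(Suc j))"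
      proof -
        have "kk (2*j+2) \<le> kk (2*(Suc j)+1)" using km[of "2*j+2" "2*(Suc j)+1"] by simp
        thus ?thesis using lsig_even[of G \<sigma> "Suc j"] by auto
      qed
      have e1: "lsig G \<sigma> (Suc n) = lsig G \<sigma> (2*(Suc j))" using sn by simp
      have e2: "lsig G \<sigma> n = lsig G \<sigma> (2*j+1)" using n by simp
      show ?thesis unfolding e1 e2 using up lo gap[of j] by linarith
    qed
  qed
  fix n :: nat
  have "\<exists>j::nat. n = 2*j \<or> n = 2*j+1" by presburger
    then obtain j where "n = 2*j \<or> n = 2*j+1" by blast
  thus "kk n \<le> lsig G \<sigma> n"
  proof
    assume n: "n = 2*j"
    thus ?thesis using lsig_even[of G \<sigma> j] km[of "2*j" "2*j+1"] by auto
  next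
    assume n: "n = 2*j+1"
    thus ?thesis using lsig_odd[of G \<sigma> j] by auto
  qed
qed

lemma pair_sum:
  fixes f :: "nat \<Rightarrow> nat"
  shows "(\<Sum>n<2*N. (if even n then - b (n div 2) else b (n div 2)) *\<^sub>R e (f n))
       = (\<Sum>j<N. b j *\<^sub>R (e (f (2*j+1)) - e (f (2*j))))"
proof (induction N)
  case 0 thus ?case by simp
next
  case (Suc N)
  have "2 * Suc N = Suc (Suc (2*N))" by simp
  hence "(\<Sum>n<2*Suc N. (if even n then - b (n div 2) else b (n div 2)) *\<^sub>R e (f n))
     = (\<Sum>n<2*N. (if even n then - b (n div 2) else b (n div 2)) *\<^sub>R e (f n))
       + (- b N) *\<^sub>R e (f (2*N)) + b N *\<^sub>R e (f (2*N+1))"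
    by simp
  thus ?case using Suc by (simp add: scaleR_diff_right algebra_simps)
qed

lemma AV:
  assumes G: "G \<subseteq> {..<N}"
  shows "norm (\<Sum>j\<in>{..<N}-G. b j *\<^sub>R d j)
         \<le> C * norm (\<Sum>j<N. b j *\<^sub>R d j) + (\<Sum>j\<in>G. \<bar>b j\<bar> * (2 * Me / real (mm j)))"
proof -
  define u where "u j i = e (kk (2*j+1) + Suc i) - e (kk (2*j+1) + i)" for j i
  define x where "x = (\<Sum>j\<in>{..<N}-G. b j *\<^sub>R d j)"
  define a where "a n = (if even n then - b (n div 2) else b (n div 2))" for n
  define S where "S = (\<Sum>j<N. b j *\<^sub>R d j)"
  have finG: "finite G" using G finite_subset by blast
  have S2: "S = (\<Sum>n<2*N. a n *\<^sub>R e (kk n))"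
    unfolding S_def a_def d_def using pair_sum[of b kk N] by simp
  have split: "(\<Sum>j<N. h j) = (\<Sum>j\<in>G. h j) + (\<Sum>j\<in>{..<N}-G. h j)" for h :: "nat \<Rightarrow> 'a"
    using sum.subset_diff[OF G] by (simp add: add.commute)
  have bound: "norm (x + (\<Sum>j\<in>G. b j *\<^sub>R u j (\<sigma> j))) \<le> C * norm S" if \<sigma>: "\<forall>j\<in>G. \<sigma> j < mm j" for \<sigma>
  proof -
    let ?l = "lsig G \<sigma>"
    have v: "valid kk ?l" by (rule lsig_valid[OF \<sigma>])
    have B0: "B \<le> kk 0" unfolding kk_def by simp
    have "(\<Sum>n<2*N. a n *\<^sub>R e (?l n)) = (\<Sum>j<N. b j *\<^sub>R (e (?l (2*j+1)) - e (?l (2*j))))"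
      unfolding a_def using pair_sum[of b ?l N] by simp
    also have "\<dots> = (\<Sum>j\<in>G. b j *\<^sub>R (e (?l (2*j+1)) - e (?l (2*j)))) + (\<Sum>j\<in>{..<N}-G. b j *\<^sub>R (e (?l (2*j+1)) - e (?l (2*j))))"
      by (rule split)
    also have "(\<Sum>j\<in>G. b j *\<^sub>R (e (?l (2*j+1)) - e (?l (2*j)))) = (\<Sum>j\<in>G. b j *\<^sub>R u j (\<sigma> j))"
      by (intro sum.cong) (auto simp: lsig_even lsig_odd2 u_def)
    also have "(\<Sum>j\<in>{..<N}-G. b j *\<^sub>R (e (?l (2*j+1)) - e (?l (2*j)))) = x"
      unfolding x_def by (intro sum.cong) (auto simp: lsig_even lsig_odd2 d_def)
    finally have eq: "(\<Sum>n<2*N. a n *\<^sub>R e (?l n)) = (\<Sum>j\<in>G. b j *\<^sub>R u j (\<sigma> j)) + x" .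
    have "norm (\<Sum>n<2*N. a n *\<^sub>R e (?l n)) \<le> C * norm (\<Sum>n<2*N. a n *\<^sub>R e (kk n))"
      by (rule unif[OF v B0])
    thus ?thesis using eq S2 by (simp add: add.commute)
  qed
  define avg where "avg j = (1 / real (mm j)) *\<^sub>R (\<Sum>i<mm j. u j i)" for j
  have av: "norm (x + (\<Sum>j\<in>G. b j *\<^sub>R avg j)) \<le> C * norm S"
    unfolding avg_def using avg_lemma[OF finG, of mm x b u "C * norm S"] mm_pos bound by blast
  have avgn: "norm (avg j) \<le> 2 * Me / real (mm j)" for j
  proof -
    have tel: "(\<Sum>i<mm j. u j i) = e (kk (2*j+1) + mm j) - e (kk (2*j+1) + 0)"
      unfolding u_def by (rule sum_lessThan_telescope)
    hence "norm (\<Sum>i<mm j. u j i) \<le> Me + Me"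
      unfolding tel using norm_triangle_ineq4[of "e (kk (2*j+1) + mm j)" "e (kk (2*j+1) + 0)"] Mb[of "kk (2*j+1) + mm j"] Mb[of "kk (2*j+1) + 0"]
      by linarith
    moreover have "real (mm j) > 0" using mm_pos by simp
    ultimately show ?thesis unfolding avg_def by (simp add: divide_right_mono)
  qed
  have "norm (\<Sum>j\<in>G. b j *\<^sub>R avg j) \<le> (\<Sum>j\<in>G. \<bar>b j\<bar> * (2 * Me / real (mm j)))"
  proof -
    have "norm (\<Sum>j\<in>G. b j *\<^sub>R avg j) \<le> (\<Sum>j\<in>G. norm (b j *\<^sub>R avg j))" by (rule norm_sum)
    also have "\<dots> \<le> (\<Sum>j\<in>G. \<bar>b j\<bar> * (2 * Me / real (mm j)))"
    proof (intro sum_mono)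
      fix j
      have "\<bar>b j\<bar> * norm (avg j) \<le> \<bar>b j\<bar> * (2 * Me / real (mm j))" using avgn[of j] by (intro mult_left_mono) auto
      thus "norm (b j *\<^sub>R avg j) \<le> \<bar>b j\<bar> * (2 * Me / real (mm j))" by simp
    qed
    finally show ?thesis .
  qed
  moreover have "norm x \<le> norm (x + (\<Sum>j\<in>G. b j *\<^sub>R avg j)) + norm (\<Sum>j\<in>G. b j *\<^sub>R avg j)"
    using norm_triangle_ineq4[of "x + (\<Sum>j\<in>G. b j *\<^sub>R avg j)" "\<Sum>j\<in>G. b j *\<^sub>R avg j"] by simp
  ultimately show ?thesis using av unfolding x_def S_def by linarith
qed

lemma Me_nonneg: "Me \<ge> 0" using Mb[of 0] norm_ge_zero order_trans by blast

lemma geo: "(\<Sum>i<N. 1 / real (mm i)) \<le> 1 / real L"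
proof -
  have g: "(\<Sum>i<N. (1/2::real)^Suc i) = 1 - (1/2)^N" by (induction N) (auto simp: algebra_simps)
  have "(\<Sum>i<N. 1 / real (mm i)) = (\<Sum>i<N. (1 / real L) * (1/2)^Suc i)"
    unfolding mm_def by (intro sum.cong) (auto simp: power_one_over)
  also have "\<dots> = (1 / real L) * (\<Sum>i<N. (1/2::real)^Suc i)" by (rule sum_distrib_left[symmetric])
  also have "\<dots> = (1 / real L) * (1 - (1/2)^N)" by (simp only: g)
  also have "\<dots> \<le> (1 / real L) * 1"
  proof (rule mult_left_mono)
    have "(0::real) \<le> (1/2)^N" by simp
    thus "1 - (1/2::real)^N \<le> 1" by linarith
  qed (use Lpos in simp)
  also have "\<dots> = 1 / real L" by simp
  finally show ?thesis .
qed

lemma dlow: "\<delta> \<le> norm (d j)"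
  unfolding d_def using sep kk_mono by (simp add: strict_mono_def)

definition beta :: "(nat \<Rightarrow> real) \<Rightarrow> nat \<Rightarrow> real" where
  "beta b N = Max ((\<lambda>j. \<bar>b j\<bar>) ` {..<N})"

lemma beta_ge: "j < N \<Longrightarrow> \<bar>b j\<bar> \<le> beta b N"
  unfolding beta_def by (intro Max_ge) auto

lemma sumbound:
  assumes G: "G \<subseteq> {..<N}" and N: "N > 0"
  shows "(\<Sum>j\<in>G. \<bar>b j\<bar> * (2 * Me / real (mm j))) \<le> beta b N * \<delta> / 2"
proof -
  have bpos: "beta b N \<ge> 0" using beta_ge[OF N, of b] by linarith
  have "(\<Sum>j\<in>G. \<bar>b j\<bar> * (2 * Me / real (mm j))) \<le> (\<Sum>j\<in>G. beta b N * (2 * Me / real (mm j)))"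
    using G beta_ge Me_nonneg by (intro sum_mono mult_right_mono) auto
  also have "\<dots> \<le> (\<Sum>j<N. beta b N * (2 * Me / real (mm j)))"
    using G bpos Me_nonneg by (intro sum_mono2) auto
  also have "\<dots> = beta b N * (2 * Me) * (\<Sum>j<N. 1 / real (mm j))"
    by (simp add: sum_distrib_left)
  also have "\<dots> \<le> beta b N * (2 * Me) * (1 / real L)"
    using geo bpos Me_nonneg by (intro mult_left_mono) auto
  also have "\<dots> = beta b N * (2 * Me / real L)" by simp
  also have "\<dots> \<le> beta b N * (\<delta> / 2)" using Lbig bpos by (intro mult_left_mono) auto
  finally show ?thesis by simp
qed

lemma beta_bound:
  assumes N: "N > 0"
  shows "beta b N * \<delta> / 2 \<le> C * norm (\<Sum>j<N. b j *\<^sub>R d j)"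
proof -
  have "beta b N \<in> (\<lambda>j. \<bar>b j\<bar>) ` {..<N}" unfolding beta_def using N by (intro Max_in) auto
  then obtain j where j: "j < N" "beta b N = \<bar>b j\<bar>" by auto
  let ?G = "{..<N} - {j}"
  have G: "?G \<subseteq> {..<N}" by auto
  have comp: "{..<N} - ?G = {j}" using j by auto
  have "norm (\<Sum>i\<in>{..<N}-?G. b i *\<^sub>R d i) = \<bar>b j\<bar> * norm (d j)" unfolding comp by simp
  moreover have "\<bar>b j\<bar> * \<delta> \<le> \<bar>b j\<bar> * norm (d j)" using dlow by (intro mult_left_mono) auto
  ultimately have "\<bar>b j\<bar> * \<delta> \<le> C * norm (\<Sum>j<N. b j *\<^sub>R d j) + beta b N * \<delta> / 2"
    using AV[OF G, of b] sumbound[OF G N, of b] by linarith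
  moreover have "beta b N * \<delta> = \<bar>b j\<bar> * \<delta>" using j by simp
  ultimately show ?thesis by linarith
qed

lemma supp:
  assumes F: "F \<subseteq> {..<N}"
  shows "norm (\<Sum>j\<in>F. b j *\<^sub>R d j) \<le> (2 * C) * norm (\<Sum>j<N. b j *\<^sub>R d j)"
proof (cases "N = 0")
  case True thus ?thesis using F by simp
next
  case False
  hence N: "N > 0" by simp
  let ?G = "{..<N} - F"
  have G: "?G \<subseteq> {..<N}" by auto
  have comp: "{..<N} - ?G = F" using F by auto
  have "norm (\<Sum>j\<in>F. b j *\<^sub>R d j) \<le> C * norm (\<Sum>j<N. b j *\<^sub>R d j) + beta b N * \<delta> / 2"
    using AV[OF G, of b] sumbound[OF G N, of b] unfolding comp by linarith
  thus ?thesis using beta_bound[OF N, of b] by linarith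
qed

lemma d_unconditional: "unconditional_basic_seq d"
proof -
  interpret suppdata d \<delta> "2 * C"
    by unfold_locales (use dpos Cpos dlow supp in auto)
  show ?thesis by (rule unconditional)
qed

end

lemma indicator_sum:
  fixes e :: "nat \<Rightarrow> 'a::real_normed_vector"
  shows "(\<Sum>i<n. ((if i = q then 1 else 0) - (if i = p then 1 else 0)) *\<^sub>R e i)
         = (if q < n then e q else 0) - (if p < n then e p else 0)"
proof -
  have "(\<Sum>i<n. ((if i = q then 1 else 0) - (if i = p then 1 else 0)) *\<^sub>R e i)
      = (\<Sum>i<n. (if i = q then e i else 0)) - (\<Sum>i<n. (if i = p then e i else 0))"
    by (simp add: scaleR_diff_left sum_subtractf if_distrib[of "\<lambda>c. c *\<^sub>R _"] cong: if_cong)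
  also have "\<dots> = (if q < n then e q else 0) - (if p < n then e p else 0)"
    by (simp add: sum.delta)
  finally show ?thesis .
qed

theorem corollary2p7:
  fixes e :: "nat \<Rightarrow> 'a::banach"
  assumes "seminormalized e" and "basic_seq e" and "quasisubsymmetric e"
  shows "equivalent_l1_basis e \<or>
    (\<exists>k::nat \<Rightarrow> nat. strict_mono k \<and>
       unconditional_basic_seq (\<lambda>n. e (k (2*n+1)) - e (k (2*n))))"
proof -
  obtain \<mu> Me where \<mu>: "\<mu> > 0" and bnds: "\<And>n. \<mu> \<le> norm (e n) \<and> norm (e n) \<le> Me"
    using assms(1) unfolding seminormalized_def by auto
  interpret bb: bbasis e \<mu> by unfold_locales (use assms(2) \<mu> bnds in auto)
  obtain Ke where Ke: "Ke > 0" and Keb: "\<And>a m N. m \<le> N \<Longrightarrow> norm (\<Sum>i<m. a i *\<^sub>R e i) \<le> Ke * norm (\<Sum>i<N. a i *\<^sub>R e i)"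
    using bb.banach_const by blast
  define \<delta> where "\<delta> = \<mu> / Ke"
  have dpos: "\<delta> > 0" unfolding \<delta>_def using \<mu> Ke by simp
  have sep: "\<delta> \<le> norm (e q - e p)" if pq: "p < q" for p q
  proof -
    define a where "a i = (if i = q then 1 else 0) - (if i = p then 1 else (0::real))" for i
    have s1: "(\<Sum>i<Suc p. a i *\<^sub>R e i) = - e p" unfolding a_def indicator_sum using pq by simp
    have s2: "(\<Sum>i<Suc q. a i *\<^sub>R e i) = e q - e p" unfolding a_def indicator_sum using pq by simp
    have "norm (- e p) \<le> Ke * norm (e q - e p)" using Keb[of "Suc p" "Suc q" a] pq s1 s2 by simp
    hence "\<mu> \<le> Ke * norm (e q - e p)" using bnds[of p] by simp
    thus ?thesis unfolding \<delta>_def using Ke by (simp add: divide_le_eq mult.commute)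
  qed
  have qs: "dominates (e \<circ> k) (e \<circ> l)" if "valid k l" for k l
    using assms(3) that unfolding quasisubsymmetric_def valid_def by blast
  obtain B C where C: "C > 0" and unif: "\<And>k l a N. valid k l \<Longrightarrow> B \<le> k 0 \<Longrightarrow>
      norm (\<Sum>n<N. a n *\<^sub>R e (l n)) \<le> C * norm (\<Sum>n<N. a n *\<^sub>R e (k n))"
    using uniform_dom[of e, OF qs] by blast
  obtain n0 :: nat where n0: "4 * Me / \<delta> \<le> real n0" using real_arch_simple by blast
  define L where "L = Suc n0"
  have Lpos: "L > 0" unfolding L_def by simp
  have Lbig: "2 * Me / real L \<le> \<delta> / 2"
  proof -
    have "4 * Me / \<delta> \<le> real L" using n0 unfolding L_def by simp
    hence "4 * Me \<le> real L * \<delta>" using dpos by (simp add: divide_le_eq)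
    thus ?thesis using Lpos dpos by (simp add: divide_le_eq field_simps)
  qed
  interpret ms: mainsetup e B C Me \<delta> L
    by unfold_locales (use C dpos Lpos bnds Lbig unif sep in auto)
  have "(\<lambda>n. e (ms.kk (2*n+1)) - e (ms.kk (2*n))) = ms.d" unfolding ms.d_def by simp
  hence "unconditional_basic_seq (\<lambda>n. e (ms.kk (2*n+1)) - e (ms.kk (2*n)))" using ms.d_unconditional by simp
  thus ?thesis using ms.kk_mono by blast
qed


end
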